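(* Let $N\ge0$ be an integer and let $\phi\in L^2(\mathbb{Q}_p)$ be a scaling function of a multiresolution analysis in $L^2(\mathbb{Q}_p)$ with $\operatorname{supp}\phi\subset B_N(0)$. Then $\phi$ is refinable and there exist complex numbers $h_k$, $k=0,\dots,p^{N+1}-1$, such that $$\phi(x)=\sum_{k=0}^{p^{N+1}-1}h_k\,\phi\Big(\frac{x}{p}-\frac{k}{p^{N+1}}\Big)\qquad\text{for all }x\in\mathbb{Q}_p$$ (as elements of $L^2(\mathbb{Q}_p)$).
   Context: $p$ is a prime, $\mathbb{Q}_p$ the field of $p$-adic numbers with norm $|\cdot|_p$ and Haar measure $dx$. Every nonzero $x\in\mathbb{Q}_p$ has canonical form $x=p^{\gamma}\sum_{j\ge0}x_jp^j$ with $x_j\in\{0,\dots,p-1\}$, $x_0\ne0$; its fractional part is $\{x\}_p=p^{\gamma}\sum_{j=0}^{-\gamma-1}x_jp^j$, and $\{0\}_p=0$. $I_p=\{a\in\mathbb{Q}_p:\{a\}_p=a\}$, $B_\gamma(a)=\{x:|x-a|_p\le p^\gamma\}$. A multiresolution analysis (MRA) in $L^2(\mathbb{Q}_p)$ is a collection of closed subspaces $V_j\subset L^2(\mathbb{Q}_p)$, $j\in\mathbb{Z}$, such that: (a) $V_j\subset V_{j+1}$ for all $j$; (b) $\bigcup_jV_j$ is dense in $L^2(\mathbb{Q}_p)$; (c) $\bigcap_jV_j=\{0\}$; (d) $f(\cdot)\in V_j\iff f(p^{-1}\cdot)\in V_{j+1}$ for all $j$; (e) there is $\phi\in V_0$ with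 $V_0=\overline{\operatorname{span}\{\phi(x-a):a\in I_p\}}$. Such a $\phi$ is called a scaling function of the MRA. A function $\phi\in L^2(\mathbb{Q}_p)$ is refinable if $\phi(x)=\sum_{a\in I_p}\alpha_a\phi(p^{-1}x-a)$ for some complex $\alpha_a$ (convergence in $L^2$). *)

theory Defs
  imports "HOL-Analysis.Analysis"
begin

text \<open>An element x of Q_p is represented by the sequence of its residues
  x mod p^n Z_p, n = 0,1,2,..., each given by its canonical representative,
  a rational number r_n in Z[1/p] with 0 <= r_n < p^n, compatible in the sense
  r_(n+1) = r_n (mod p^n Z).  (Q_p is the inverse limit of Z[1/p]/p^n Z.)
  r_0 is exactly the fractional part of x.\<close>

definition padic :: "nat \<Rightarrow> (nat \<Rightarrow> rat) set" where
  "padic p = {r. \<forall>n. 0 \<le> r n \<and> r n < of_nat (p ^ n)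
      \<and> (\<exists>k::nat. of_nat (p ^ k) * r n \<in> \<int>)
      \<and> (\<exists>k::int. r (Suc n) - r n = of_nat (p ^ n) * of_int k)}"

definition rmod :: "rat \<Rightarrow> rat \<Rightarrow> rat" where
  "rmod q m = q - m * of_int \<lfloor>q / m\<rfloor>"

text \<open>embedding of Z[1/p] (as a subset of Q) into Q_p\<close>
definition padic_of_rat :: "nat \<Rightarrow> rat \<Rightarrow> (nat \<Rightarrow> rat)" where
  "padic_of_rat p q = (\<lambda>n. rmod q (of_nat (p ^ n)))"

definition pzero :: "nat \<Rightarrow> rat" where
  "pzero = (\<lambda>n. 0)"

definition padd :: "nat \<Rightarrow> (nat \<Rightarrow> rat) \<Rightarrow> (nat \<Rightarrow> rat) \<Rightarrow> (nat \<Rightarrow> rat)" where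
  "padd p x y = (\<lambda>n. rmod (x n + y n) (of_nat (p ^ n)))"

definition psub :: "nat \<Rightarrow> (nat \<Rightarrow> rat) \<Rightarrow> (nat \<Rightarrow> rat) \<Rightarrow> (nat \<Rightarrow> rat)" where
  "psub p x y = (\<lambda>n. rmod (x n - y n) (of_nat (p ^ n)))"

text \<open>x / p, i.e. p^(-1) x\<close>
definition pdivp :: "nat \<Rightarrow> (nat \<Rightarrow> rat) \<Rightarrow> (nat \<Rightarrow> rat)" where
  "pdivp p x = (\<lambda>n. x (Suc n) / of_nat p)"

definition pfrac :: "(nat \<Rightarrow> rat) \<Rightarrow> rat" where
  "pfrac x = x 0"

text \<open>x \<in> p^n Z_p, for an integer n\<close>
definition in_pZ :: "nat \<Rightarrow> int \<Rightarrow> (nat \<Rightarrow> rat) \<Rightarrow> bool" where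
  "in_pZ p n x = (if 0 \<le> n then x (nat n) = 0
                  else of_nat (p ^ nat (- n)) * x 0 \<in> \<int>)"

text \<open>p-adic norm: |x|_p <= p^m iff x \<in> p^(-m) Z_p; |x|_p is the infimum of these p^m
  (this gives 0 for x = 0 and p^(-gamma) for x = p^gamma(x_0 + x_1 p + ...), x_0 \<noteq> 0).\<close>
definition pnorm :: "nat \<Rightarrow> (nat \<Rightarrow> rat) \<Rightarrow> real" where
  "pnorm p x = Inf {real p powr real_of_int m | m::int. in_pZ p (- m) x}"

definition pball :: "nat \<Rightarrow> int \<Rightarrow> (nat \<Rightarrow> rat) \<Rightarrow> (nat \<Rightarrow> rat) set" where
  "pball p \<gamma> a = {x \<in> padic p. pnorm p (psub p x a) \<le> real p powr real_of_int \<gamma>}"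

definition Ip :: "nat \<Rightarrow> (nat \<Rightarrow> rat) set" where
  "Ip p = {a \<in> padic p. padic_of_rat p (pfrac a) = a}"

text \<open>Haar measure dx on Q_p: the measure on the sigma-algebra generated by the balls
  (= the Borel sets of Q_p) with mass p^gamma on every ball B_gamma(a).\<close>
definition haar :: "nat \<Rightarrow> (nat \<Rightarrow> rat) measure" where
  "haar p = extend_measure (padic p) {(\<gamma>, a). a \<in> padic p}
             (\<lambda>(\<gamma>, a). pball p \<gamma> a) (\<lambda>(\<gamma>, a). ennreal (real p powr real_of_int \<gamma>))"

text \<open>Elements of L^2 are represented by square-integrable functions; equality in L^2
  is equality almost everywhere.\<close>
definition L2 :: "nat \<Rightarrow> ((nat \<Rightarrow> rat) \<Rightarrow> complex) set" where
  "L2 p = {f. f \<in> borel_measurable (haar p) \<and> integrable (haar p) (\<lambda>x. (cmod (f x))\<^sup>2)}"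

definition l2dist :: "nat \<Rightarrow> ((nat \<Rightarrow> rat) \<Rightarrow> complex) \<Rightarrow> ((nat \<Rightarrow> rat) \<Rightarrow> complex) \<Rightarrow> real" where
  "l2dist p f g = sqrt (\<integral>x. (cmod (f x - g x))\<^sup>2 \<partial>haar p)"

definition L2closure :: "nat \<Rightarrow> ((nat \<Rightarrow> rat) \<Rightarrow> complex) set \<Rightarrow> ((nat \<Rightarrow> rat) \<Rightarrow> complex) set" where
  "L2closure p S = {f \<in> L2 p. \<forall>e>0. \<exists>g\<in>S. l2dist p f g < e}"

definition closed_subspace :: "nat \<Rightarrow> ((nat \<Rightarrow> rat) \<Rightarrow> complex) set \<Rightarrow> bool" where
  "closed_subspace p V \<longleftrightarrow> V \<subseteq> L2 p \<and> (\<lambda>x. 0) \<in> V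
     \<and> (\<forall>f\<in>V. \<forall>g\<in>V. (\<lambda>x. f x + g x) \<in> V)
     \<and> (\<forall>c f. f \<in> V \<longrightarrow> (\<lambda>x. c * f x) \<in> V)
     \<and> L2closure p V \<subseteq> V"

definition trans_span :: "nat \<Rightarrow> ((nat \<Rightarrow> rat) \<Rightarrow> complex) \<Rightarrow> ((nat \<Rightarrow> rat) \<Rightarrow> complex) set" where
  "trans_span p \<phi> = {(\<lambda>x. \<Sum>a\<in>F. c a * \<phi> (psub p x a)) | F c. finite F \<and> F \<subseteq> Ip p}"

definition scaling_function ::
  "nat \<Rightarrow> (int \<Rightarrow> ((nat \<Rightarrow> rat) \<Rightarrow> complex) set) \<Rightarrow> ((nat \<Rightarrow> rat) \<Rightarrow> complex) \<Rightarrow> bool" where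
  "scaling_function p V \<phi> \<longleftrightarrow> \<phi> \<in> V 0 \<and> V 0 = L2closure p (trans_span p \<phi>)"

definition MRA :: "nat \<Rightarrow> (int \<Rightarrow> ((nat \<Rightarrow> rat) \<Rightarrow> complex) set) \<Rightarrow> bool" where
  "MRA p V \<longleftrightarrow> (\<forall>j. closed_subspace p (V j))
     \<and> (\<forall>j. V j \<subseteq> V (j + 1))
     \<and> L2closure p (\<Union>j. V j) = L2 p
     \<and> (\<forall>f. (\<forall>j. f \<in> V j) \<longrightarrow> (AE x in haar p. f x = 0))
     \<and> (\<forall>j f. f \<in> V j \<longleftrightarrow> (\<lambda>x. f (pdivp p x)) \<in> V (j + 1))
     \<and> (\<exists>\<phi>. scaling_function p V \<phi>)"

text \<open>refinable: phi(x) = sum_{a \<in> I_p} alpha_a phi(p^(-1) x - a), the series converging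
  (unconditionally) in L^2.\<close>
definition refinable :: "nat \<Rightarrow> ((nat \<Rightarrow> rat) \<Rightarrow> complex) \<Rightarrow> bool" where
  "refinable p \<phi> \<longleftrightarrow> (\<exists>\<alpha> :: (nat \<Rightarrow> rat) \<Rightarrow> complex.
     ((\<lambda>F. l2dist p \<phi> (\<lambda>x. \<Sum>a\<in>F. \<alpha> a * \<phi> (psub p (pdivp p x) a)))
        \<longlongrightarrow> 0) (finite_subsets_at_top (Ip p)))"

end

theory Submission
  imports Defs
begin


lemma rmod_bounds:
  fixes q m :: rat assumes "m > 0" shows "0 \<le> rmod q m" "rmod q m < m"
proof -
  have a: "of_int \<lfloor>q/m\<rfloor> \<le> q/m" by (rule of_int_floor_le)
  have b: "q/m < of_int \<lfloor>q/m\<rfloor> + 1" by (rule floor_correct[THEN conjunct2, unfolded of_int_add of_int_1])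
  from a assms have "m * of_int \<lfloor>q/m\<rfloor> \<le> q" by (simp add: le_divide_eq mult.commute)
  then show "0 \<le> rmod q m" by (simp add: rmod_def)
  from b assms have "q < m * of_int \<lfloor>q/m\<rfloor> + m" by (simp add: divide_less_eq algebra_simps)
  then show "rmod q m < m" by (simp add: rmod_def)
qed

lemma rmod_id: fixes q m :: rat assumes "0 \<le> q" "q < m" shows "rmod q m = q"
proof -
  have "\<lfloor>q/m\<rfloor> = 0" using assms by (simp add: floor_eq_iff)
  then show ?thesis by (simp add: rmod_def)
qed

lemma rmod_cong: fixes q r m :: rat assumes "m > 0" "q - r = m * of_int k" shows "rmod q m = rmod r m"
proof -
  have "q/m = r/m + of_int k" using assms by (simp add: field_simps)
  then have "\<lfloor>q/m\<rfloor> = \<lfloor>r/m\<rfloor> + k" by simp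
  then show ?thesis using assms unfolding rmod_def by (simp add: algebra_simps)
qed

lemma rmod_diff: fixes q m :: rat shows "q - rmod q m = m * of_int \<lfloor>q/m\<rfloor>"
  by (simp add: rmod_def)

lemma pow_powi_Ints:
  assumes "p \<ge> 2" "nat (-\<gamma>) \<le> m"
  shows "(of_nat p :: rat) ^ m * (of_nat p) powi \<gamma> \<in> \<int>"
proof -
  have "(of_nat p :: rat) ^ m * (of_nat p) powi \<gamma> = (of_nat p) powi (int m + \<gamma>)"
    using assms by (simp add: power_int_add power_int_of_nat)
  also have "\<dots> = (of_nat p) ^ nat (int m + \<gamma>)"
  proof -
    have e: "int m + \<gamma> = int (nat (int m + \<gamma>))" using assms by simp
    show ?thesis by (subst e) (simp only: power_int_of_nat)
  qed
  finally show ?thesis by simp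
qed

lemma shift_Ints:
  assumes "p \<ge> 2" "nat (-\<gamma>) \<le> m" "u - v = (of_nat p :: rat) ^ m * of_int k"
  shows "u * (of_nat p) powi \<gamma> \<in> \<int> \<longleftrightarrow> v * (of_nat p) powi \<gamma> \<in> \<int>"
proof -
  have "(u - v) * (of_nat p) powi \<gamma> = of_int k * ((of_nat p :: rat) ^ m * (of_nat p) powi \<gamma>)"
    using assms(3) by simp
  also have "\<dots> \<in> \<int>" using pow_powi_Ints[OF assms(1,2)] by simp
  finally have d: "u * (of_nat p) powi \<gamma> - v * (of_nat p) powi \<gamma> \<in> \<int>" by (simp add: algebra_simps)
  show ?thesis
  proof
    assume "u * (of_nat p) powi \<gamma> \<in> \<int>"
    from Ints_diff[OF this d] show "v * (of_nat p) powi \<gamma> \<in> \<int>" by simp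
  next
    assume "v * (of_nat p) powi \<gamma> \<in> \<int>"
    from Ints_add[OF this d] show "u * (of_nat p) powi \<gamma> \<in> \<int>" by simp
  qed
qed



lemma padicD:
  assumes "x \<in> padic p"
  shows "0 \<le> x n" "x n < of_nat p ^ n" "\<exists>k. of_nat p ^ k * x n \<in> \<int>"
    "\<exists>k::int. x (Suc n) - x n = of_nat p ^ n * of_int k"
  using assms unfolding padic_def by (auto simp: of_nat_power)

lemma padicI:
  assumes "\<And>n. 0 \<le> x n" "\<And>n. x n < of_nat p ^ n" "\<And>n. \<exists>k. of_nat p ^ k * x n \<in> \<int>"
    "\<And>n. \<exists>k::int. x (Suc n) - x n = of_nat p ^ n * of_int k"
  shows "x \<in> padic p"
  using assms unfolding padic_def by (auto simp: of_nat_power)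

lemma padic_diff_gen:
  assumes "x \<in> padic p" "n \<le> m"
  shows "\<exists>k::int. x m - x n = (of_nat p :: rat) ^ n * of_int k"
  using assms(2)
proof (induction m rule: dec_induct)
  case base then show ?case by (intro exI[of _ 0]) simp
next
  case (step m)
  then obtain k2 where k2: "x m - x n = (of_nat p :: rat) ^ n * of_int k2" by blast
  obtain k1 where k1: "x (Suc m) - x m = (of_nat p :: rat) ^ m * of_int k1" using padicD(4)[OF assms(1)] by blast
  have pm: "(of_nat p :: rat) ^ m = of_nat p ^ n * of_nat p ^ (m - n)"
    using step(1) by (simp add: power_add[symmetric])
  have "x (Suc m) - x n = (of_nat p :: rat) ^ n * of_int (int p ^ (m - n) * k1 + k2)"
    using k1 k2 pm by (simp add: algebra_simps)
  then show ?case by blast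
qed

lemma padic_cong_base:
  assumes "p \<ge> 2" "x \<in> padic p" "y \<in> padic p" "nat (-\<gamma>) \<le> m"
  shows "(x m - y m) * (of_nat p) powi \<gamma> \<in> \<int> \<longleftrightarrow> (x (nat (-\<gamma>)) - y (nat (-\<gamma>))) * (of_nat p) powi \<gamma> \<in> \<int>"
proof -
  obtain k1 where k1: "x m - x (nat (-\<gamma>)) = (of_nat p :: rat) ^ nat (-\<gamma>) * of_int k1"
    using padic_diff_gen[OF assms(2,4)] by blast
  obtain k2 where k2: "y m - y (nat (-\<gamma>)) = (of_nat p :: rat) ^ nat (-\<gamma>) * of_int k2"
    using padic_diff_gen[OF assms(3,4)] by blast
  have "(x m - y m) - (x (nat (-\<gamma>)) - y (nat (-\<gamma>))) = (of_nat p :: rat) ^ nat (-\<gamma>) * of_int (k1 - k2)"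
    using k1 k2 by (simp add: algebra_simps)
  from shift_Ints[OF assms(1) order_refl this] show ?thesis .
qed

lemma padic_cong:
  assumes "p \<ge> 2" "x \<in> padic p" "y \<in> padic p" "nat (-\<gamma>) \<le> m" "nat (-\<gamma>) \<le> m'"
  shows "(x m - y m) * (of_nat p) powi \<gamma> \<in> \<int> \<longleftrightarrow> (x m' - y m') * (of_nat p) powi \<gamma> \<in> \<int>"
  using padic_cong_base[OF assms(1-4)] padic_cong_base[OF assms(1-3,5)] by simp

lemma pzero_padic: "p \<ge> 2 \<Longrightarrow> pzero \<in> padic p"
  by (rule padicI) (auto simp: pzero_def intro!: exI[of _ 0])

lemma padic_cong0:
  assumes "p \<ge> 2" "x \<in> padic p" "nat (-\<gamma>) \<le> m" "nat (-\<gamma>) \<le> m'"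
  shows "x m * (of_nat p) powi \<gamma> \<in> \<int> \<longleftrightarrow> x m' * (of_nat p) powi \<gamma> \<in> \<int>"
  using padic_cong[OF assms(1,2) pzero_padic[OF assms(1)] assms(3,4)] by (simp add: pzero_def)

lemma in_pZ_iff:
  assumes "p \<ge> 2" "y \<in> padic p"
  shows "in_pZ p (-\<gamma>) y \<longleftrightarrow> y (nat (-\<gamma>)) * (of_nat p) powi \<gamma> \<in> \<int>"
proof (cases "\<gamma> \<le> 0")
  case True
  define n where "n = nat (-\<gamma>)"
  have g: "\<gamma> = - int n" using True n_def by simp
  have pg: "(of_nat p :: rat) powi \<gamma> = inverse (of_nat p ^ n)"
    unfolding g power_int_minus power_int_of_nat ..
  have pos: "(of_nat p :: rat) ^ n > 0" using assms by simp
  have "y n = 0 \<longleftrightarrow> y n * inverse (of_nat p ^ n) \<in> \<int>"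
  proof
    assume "y n * inverse (of_nat p ^ n) \<in> \<int>"
    then obtain k where k: "y n * inverse (of_nat p ^ n) = of_int k" by (auto elim: Ints_cases)
    have "0 \<le> y n * inverse (of_nat p ^ n)" using padicD(1)[OF assms(2)] pos by simp
    moreover have "y n * inverse (of_nat p ^ n) < 1"
      using padicD(2)[OF assms(2), of n] pos by (simp add: field_simps)
    ultimately have "k = 0" using k by linarith
    then show "y n = 0" using k pos assms(1) by simp
  qed simp
  then show ?thesis unfolding in_pZ_def using True by (simp add: pg n_def[symmetric])
next
  case False
  then have e: "\<gamma> = int (nat \<gamma>)" by simp
  have pg: "(of_nat p :: rat) powi \<gamma> = of_nat p ^ nat \<gamma>"
    by (subst e) (simp only: power_int_of_nat)
  show ?thesis unfolding in_pZ_def using False by (simp add: pg of_nat_power mult.commute)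
qed

lemma Z_mono:
  assumes "p \<ge> 2" "y \<in> padic p" "y (nat (-\<gamma>)) * (of_nat p) powi \<gamma> \<in> \<int>" "\<gamma> \<le> \<gamma>'"
  shows "y (nat (-\<gamma>')) * (of_nat p) powi \<gamma>' \<in> \<int>"
proof -
  have "nat (-\<gamma>') \<le> nat (-\<gamma>)" using assms(4) by simp
  have "y (nat (-\<gamma>)) * (of_nat p) powi \<gamma>' = y (nat (-\<gamma>)) * (of_nat p) powi \<gamma> * (of_nat p) ^ nat (\<gamma>' - \<gamma>)"
  proof -
    have "(of_nat p :: rat) powi \<gamma>' = (of_nat p) powi \<gamma> * (of_nat p) powi (\<gamma>' - \<gamma>)"
      using assms(1) by (simp add: power_int_add[symmetric])
    also have "(of_nat p :: rat) powi (\<gamma>' - \<gamma>) = of_nat p ^ nat (\<gamma>' - \<gamma>)"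
    proof -
      have e: "\<gamma>' - \<gamma> = int (nat (\<gamma>' - \<gamma>))" using assms(4) by simp
      show ?thesis by (subst e) (simp only: power_int_of_nat)
    qed
    finally show ?thesis by simp
  qed
  also have "\<dots> \<in> \<int>" using assms(3) by simp
  finally show ?thesis using padic_cong0[OF assms(1,2), of \<gamma>' "nat (-\<gamma>)" "nat (-\<gamma>')"] \<open>nat (-\<gamma>') \<le> nat (-\<gamma>)\<close> by simp
qed

lemma pnorm_le_iff:
  assumes "p \<ge> 2" "y \<in> padic p"
  shows "pnorm p y \<le> real p powr real_of_int \<gamma> \<longleftrightarrow> y (nat (-\<gamma>)) * (of_nat p) powi \<gamma> \<in> \<int>"
proof -
  define S where "S = {real p powr real_of_int m | m::int. in_pZ p (- m) y}"
  have S: "S = {real p powr real_of_int m | m::int. y (nat (-m)) * (of_nat p) powi m \<in> \<int>}"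
    unfolding S_def using in_pZ_iff[OF assms] by simp
  have bdd: "bdd_below S" unfolding S_def by (intro bdd_belowI[of _ 0]) auto
  show ?thesis
  proof
    assume le: "pnorm p y \<le> real p powr real_of_int \<gamma>"
    show "y (nat (-\<gamma>)) * (of_nat p) powi \<gamma> \<in> \<int>"
    proof (rule ccontr)
      assume nZ: "\<not> ?thesis"
      obtain k where k: "of_nat p ^ k * y 0 \<in> \<int>" using padicD(3)[OF assms(2)] by blast
      have "y (nat (- int k)) * (of_nat p) powi (int k) \<in> \<int>"
        using k by (simp add: power_int_of_nat mult.commute)
      then have "real p powr real_of_int (int k) \<in> S" unfolding S by blast
      then have ne: "S \<noteq> {}" by blast
      have "real p powr real_of_int (\<gamma> + 1) \<le> Inf S"
      proof (rule cInf_greatest[OF ne])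
        fix s assume "s \<in> S"
        then obtain m where m: "s = real p powr real_of_int m" "y (nat (-m)) * (of_nat p) powi m \<in> \<int>"
          unfolding S by blast
        have "\<gamma> < m" using Z_mono[OF assms m(2), of \<gamma>] nZ by force
        then have "real_of_int (\<gamma> + 1) \<le> real_of_int m" by simp
        then show "real p powr real_of_int (\<gamma> + 1) \<le> s" unfolding m(1) using assms(1) by (intro powr_mono) auto
      qed
      moreover have "real p powr real_of_int \<gamma> < real p powr real_of_int (\<gamma> + 1)"
        using assms(1) by (intro powr_less_mono) auto
      ultimately show False using le unfolding pnorm_def S_def by linarith
    qed
  next
    assume "y (nat (-\<gamma>)) * (of_nat p) powi \<gamma> \<in> \<int>"
    then have "real p powr real_of_int \<gamma> \<in> S" unfolding S by blast
    then show "pnorm p y \<le> real p powr real_of_int \<gamma>" unfolding pnorm_def S_def[symmetric]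
      by (rule cInf_lower[OF _ bdd])
  qed
qed




lemma Zp_comb:
  assumes "(of_nat p :: rat) ^ k1 * u \<in> \<int>" "(of_nat p :: rat) ^ k2 * v \<in> \<int>"
  shows "(of_nat p :: rat) ^ (k1 + k2) * (u + v) \<in> \<int>" "(of_nat p :: rat) ^ (k1 + k2) * (u - v) \<in> \<int>"
proof -
  have a: "(of_nat p :: rat) ^ (k1 + k2) * u = of_nat p ^ k2 * (of_nat p ^ k1 * u)" by (simp add: power_add)
  have b: "(of_nat p :: rat) ^ (k1 + k2) * v = of_nat p ^ k1 * (of_nat p ^ k2 * v)" by (simp add: power_add)
  have "(of_nat p :: rat) ^ (k1 + k2) * u \<in> \<int>" unfolding a using Ints_mult[OF _ assms(1), of "of_nat p ^ k2"] by simp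
  moreover have "(of_nat p :: rat) ^ (k1 + k2) * v \<in> \<int>" unfolding b using Ints_mult[OF _ assms(2), of "of_nat p ^ k1"] by simp
  ultimately show "(of_nat p :: rat) ^ (k1 + k2) * (u + v) \<in> \<int>" "(of_nat p :: rat) ^ (k1 + k2) * (u - v) \<in> \<int>"
    by (simp_all add: algebra_simps Ints_add Ints_diff)
qed

lemma padic_rmodI:
  assumes p: "p \<ge> 2" and i: "\<And>n. \<exists>k. (of_nat p :: rat) ^ k * u n \<in> \<int>"
    and c: "\<And>n. \<exists>k::int. u (Suc n) - u n = (of_nat p :: rat) ^ n * of_int k"
  shows "(\<lambda>n. rmod (u n) (of_nat (p ^ n))) \<in> padic p"
proof (rule padicI)
  fix n
  have pos: "(of_nat p :: rat) ^ n > 0" using p by simp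
  show "0 \<le> rmod (u n) (of_nat (p ^ n))" "rmod (u n) (of_nat (p ^ n)) < of_nat p ^ n"
    using rmod_bounds[OF pos] by (simp_all add: of_nat_power)
  obtain k where k: "(of_nat p :: rat) ^ k * u n \<in> \<int>" using i by blast
  have "(of_nat p :: rat) ^ k * rmod (u n) (of_nat (p ^ n))
        = of_nat p ^ k * u n - of_int (int p ^ k * int p ^ n * \<lfloor>u n / of_nat p ^ n\<rfloor>)"
    unfolding rmod_def by (simp add: algebra_simps of_nat_power)
  also have "\<dots> \<in> \<int>" using k by (intro Ints_diff) auto
  finally show "\<exists>k. (of_nat p :: rat) ^ k * rmod (u n) (of_nat (p ^ n)) \<in> \<int>" by blast
  obtain k where k: "u (Suc n) - u n = (of_nat p :: rat) ^ n * of_int k" using c by blast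
  have "rmod (u (Suc n)) (of_nat (p ^ Suc n)) - rmod (u n) (of_nat (p ^ n))
      = (u (Suc n) - u n) - of_nat p ^ Suc n * of_int \<lfloor>u (Suc n) / of_nat p ^ Suc n\<rfloor>
          + of_nat p ^ n * of_int \<lfloor>u n / of_nat p ^ n\<rfloor>"
    unfolding rmod_def by (simp add: of_nat_power)
  also have "\<dots> = (of_nat p :: rat) ^ n * of_int (k - int p * \<lfloor>u (Suc n) / of_nat p ^ Suc n\<rfloor> + \<lfloor>u n / of_nat p ^ n\<rfloor>)"
    unfolding k by (simp add: algebra_simps)
  finally show "\<exists>k::int. rmod (u (Suc n)) (of_nat (p ^ Suc n)) - rmod (u n) (of_nat (p ^ n)) = of_nat p ^ n * of_int k"
    by blast
qed

lemma psub_padic: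
  assumes "p \<ge> 2" "x \<in> padic p" "a \<in> padic p"
  shows "psub p x a \<in> padic p"
  unfolding psub_def
proof (rule padic_rmodI[OF assms(1)])
  fix n
  obtain k1 where "(of_nat p :: rat) ^ k1 * x n \<in> \<int>" using padicD(3)[OF assms(2)] by blast
  moreover obtain k2 where "(of_nat p :: rat) ^ k2 * a n \<in> \<int>" using padicD(3)[OF assms(3)] by blast
  ultimately show "\<exists>k. (of_nat p :: rat) ^ k * (x n - a n) \<in> \<int>" using Zp_comb by blast
  obtain k1 where k1: "x (Suc n) - x n = (of_nat p :: rat) ^ n * of_int k1" using padicD(4)[OF assms(2)] by blast
  obtain k2 where k2: "a (Suc n) - a n = (of_nat p :: rat) ^ n * of_int k2" using padicD(4)[OF assms(3)] by blast
  have "x (Suc n) - a (Suc n) - (x n - a n) = (of_nat p :: rat) ^ n * of_int (k1 - k2)"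
    using k1 k2 by (simp add: algebra_simps)
  then show "\<exists>k::int. x (Suc n) - a (Suc n) - (x n - a n) = (of_nat p :: rat) ^ n * of_int k" by blast
qed

lemma padd_padic:
  assumes "p \<ge> 2" "x \<in> padic p" "a \<in> padic p"
  shows "padd p x a \<in> padic p"
  unfolding padd_def
proof (rule padic_rmodI[OF assms(1)])
  fix n
  obtain k1 where "(of_nat p :: rat) ^ k1 * x n \<in> \<int>" using padicD(3)[OF assms(2)] by blast
  moreover obtain k2 where "(of_nat p :: rat) ^ k2 * a n \<in> \<int>" using padicD(3)[OF assms(3)] by blast
  ultimately show "\<exists>k. (of_nat p :: rat) ^ k * (x n + a n) \<in> \<int>" using Zp_comb by blast
  obtain k1 where k1: "x (Suc n) - x n = (of_nat p :: rat) ^ n * of_int k1" using padicD(4)[OF assms(2)] by blast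
  obtain k2 where k2: "a (Suc n) - a n = (of_nat p :: rat) ^ n * of_int k2" using padicD(4)[OF assms(3)] by blast
  have "x (Suc n) + a (Suc n) - (x n + a n) = (of_nat p :: rat) ^ n * of_int (k1 + k2)"
    using k1 k2 by (simp add: algebra_simps)
  then show "\<exists>k::int. x (Suc n) + a (Suc n) - (x n + a n) = (of_nat p :: rat) ^ n * of_int k" by blast
qed

lemma padic_of_rat_padic:
  assumes "p \<ge> 2" "(of_nat p :: rat) ^ j * q \<in> \<int>"
  shows "padic_of_rat p q \<in> padic p"
  unfolding padic_of_rat_def
proof (rule padic_rmodI[OF assms(1)])
  show "\<exists>k. (of_nat p :: rat) ^ k * q \<in> \<int>" for n using assms(2) by blast
  show "\<exists>k::int. q - q = (of_nat p :: rat) ^ n * of_int k" for n by (intro exI[of _ 0]) simp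
qed

lemma pball_iff:
  assumes p: "p \<ge> 2" and a: "a \<in> padic p" and m: "nat (-\<gamma>) \<le> m"
  shows "x \<in> pball p \<gamma> a \<longleftrightarrow> x \<in> padic p \<and> (x m - a m) * (of_nat p) powi \<gamma> \<in> \<int>"
proof (cases "x \<in> padic p")
  case True
  have s: "psub p x a \<in> padic p" using psub_padic[OF p True a] .
  have "x \<in> pball p \<gamma> a \<longleftrightarrow> psub p x a (nat (-\<gamma>)) * (of_nat p) powi \<gamma> \<in> \<int>"
    unfolding pball_def using True pnorm_le_iff[OF p s] by simp
  also have "\<dots> \<longleftrightarrow> psub p x a m * (of_nat p) powi \<gamma> \<in> \<int>"
    using padic_cong0[OF p s order_refl m] by simp
  also have "\<dots> \<longleftrightarrow> (x m - a m) * (of_nat p) powi \<gamma> \<in> \<int>"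
  proof (rule shift_Ints[OF p m])
    show "psub p x a m - (x m - a m) = (of_nat p :: rat) ^ m * of_int (- \<lfloor>(x m - a m) / of_nat (p ^ m)\<rfloor>)"
      unfolding psub_def rmod_def by (simp add: of_nat_power)
  qed
  finally show ?thesis using True by simp
qed (simp add: pball_def)

definition mulp :: "nat \<Rightarrow> (nat \<Rightarrow> rat) \<Rightarrow> (nat \<Rightarrow> rat)" where
  "mulp p y = (\<lambda>n. case n of 0 \<Rightarrow> rmod (of_nat p * y 0) 1 | Suc m \<Rightarrow> of_nat p * y m)"

lemma pdivp_padic:
  assumes p: "p \<ge> 2" and x: "x \<in> padic p"
  shows "pdivp p x \<in> padic p"
proof (rule padicI)
  fix n
  have pp: "(of_nat p :: rat) > 0" using p by simp
  show "0 \<le> pdivp p x n" unfolding pdivp_def using padicD(1)[OF x] pp by simp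
  show "pdivp p x n < of_nat p ^ n" unfolding pdivp_def using padicD(2)[OF x, of "Suc n"] pp
    by (simp add: divide_less_eq mult.commute)
  obtain k where k: "(of_nat p :: rat) ^ k * x (Suc n) \<in> \<int>" using padicD(3)[OF x] by blast
  have "(of_nat p :: rat) ^ Suc k * pdivp p x n = of_nat p ^ k * x (Suc n)"
    unfolding pdivp_def using pp by simp
  then show "\<exists>k. (of_nat p :: rat) ^ k * pdivp p x n \<in> \<int>" using k by metis
  obtain k where k: "x (Suc (Suc n)) - x (Suc n) = (of_nat p :: rat) ^ Suc n * of_int k" using padicD(4)[OF x] by blast
  have "pdivp p x (Suc n) - pdivp p x n = (x (Suc (Suc n)) - x (Suc n)) / of_nat p"
    unfolding pdivp_def by (simp add: diff_divide_distrib)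
  also have "\<dots> = (of_nat p :: rat) ^ n * of_int k" unfolding k using pp by simp
  finally show "\<exists>k::int. pdivp p x (Suc n) - pdivp p x n = of_nat p ^ n * of_int k" by blast
qed

lemma mulp_padic:
  assumes p: "p \<ge> 2" and y: "y \<in> padic p"
  shows "mulp p y \<in> padic p"
proof (rule padicI)
  fix n
  have pp: "(of_nat p :: rat) > 0" using p by simp
  show "0 \<le> mulp p y n" unfolding mulp_def
    using rmod_bounds[of 1] padicD(1)[OF y] pp by (cases n) auto
  show "mulp p y n < of_nat p ^ n" unfolding mulp_def
    using rmod_bounds[of 1] padicD(2)[OF y] pp by (cases n) auto
  show "\<exists>k. (of_nat p :: rat) ^ k * mulp p y n \<in> \<int>"
  proof (cases n)
    case 0
    obtain k where k: "(of_nat p :: rat) ^ k * y 0 \<in> \<int>" using padicD(3)[OF y] by blast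
    have "(of_nat p :: rat) ^ k * mulp p y n = of_nat p * (of_nat p ^ k * y 0) - of_nat p ^ k * of_int \<lfloor>of_nat p * y 0\<rfloor>"
      unfolding mulp_def 0 rmod_def by (simp add: algebra_simps)
    also have "\<dots> \<in> \<int>" using k by (intro Ints_diff Ints_mult[OF _ k]) auto
    finally show ?thesis by blast
  next
    case (Suc m)
    obtain k where k: "(of_nat p :: rat) ^ k * y m \<in> \<int>" using padicD(3)[OF y] by blast
    have "(of_nat p :: rat) ^ k * mulp p y n = of_nat p * (of_nat p ^ k * y m)"
      unfolding mulp_def Suc by (simp add: algebra_simps)
    also have "\<dots> \<in> \<int>" using k by (intro Ints_mult[OF _ k]) auto
    finally show ?thesis by blast
  qed
  show "\<exists>k::int. mulp p y (Suc n) - mulp p y n = of_nat p ^ n * of_int k"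
  proof (cases n)
    case 0
    have "mulp p y (Suc n) - mulp p y n = of_int \<lfloor>of_nat p * y 0\<rfloor>"
      unfolding mulp_def 0 rmod_def by simp
    then show ?thesis using 0 by auto
  next
    case (Suc m)
    obtain k where k: "y (Suc m) - y m = (of_nat p :: rat) ^ m * of_int k" using padicD(4)[OF y] by blast
    have "mulp p y (Suc n) - mulp p y n = of_nat p * (y (Suc m) - y m)"
      unfolding mulp_def Suc by (simp add: algebra_simps)
    also have "\<dots> = (of_nat p :: rat) ^ n * of_int k" unfolding k Suc by simp
    finally show ?thesis by blast
  qed
qed

lemma mulp_pdivp:
  assumes p: "p \<ge> 2" and x: "x \<in> padic p"
  shows "mulp p (pdivp p x) = x"
proof
  fix n
  have pp: "(of_nat p :: rat) > 0" using p by simp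
  show "mulp p (pdivp p x) n = x n"
  proof (cases n)
    case 0
    obtain k where k: "x (Suc 0) - x 0 = (of_nat p :: rat) ^ 0 * of_int k" using padicD(4)[OF x] by blast
    have "mulp p (pdivp p x) n = rmod (x 1) 1" unfolding mulp_def pdivp_def 0 using pp by simp
    also have "\<dots> = rmod (x 0) 1" using k by (intro rmod_cong[of 1 _ _ k]) auto
    also have "\<dots> = x 0" using padicD(1,2)[OF x, of 0] by (intro rmod_id) auto
    finally show ?thesis using 0 by simp
  next
    case (Suc m)
    then show ?thesis unfolding mulp_def pdivp_def using pp by simp
  qed
qed




lemma powi_shift:
  assumes "p \<ge> 2" "\<gamma> \<le> \<gamma>'"
  shows "(of_nat p :: rat) powi \<gamma>' = (of_nat p) powi \<gamma> * of_nat p ^ nat (\<gamma>' - \<gamma>)"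
proof -
  have "(of_nat p :: rat) powi \<gamma>' = (of_nat p) powi \<gamma> * (of_nat p) powi (\<gamma>' - \<gamma>)"
    using assms(1) by (simp add: power_int_add[symmetric])
  also have "(of_nat p :: rat) powi (\<gamma>' - \<gamma>) = of_nat p ^ nat (\<gamma>' - \<gamma>)"
  proof -
    have e: "\<gamma>' - \<gamma> = int (nat (\<gamma>' - \<gamma>))" using assms(2) by simp
    show ?thesis by (subst e) (simp only: power_int_of_nat)
  qed
  finally show ?thesis .
qed

lemma powi_succ:
  assumes "p \<ge> 2"
  shows "(of_nat p :: rat) powi (\<gamma> + 1) = (of_nat p) powi \<gamma> * of_nat p"
  using assms by (simp add: power_int_add)

lemma pre_psub:
  assumes p: "p \<ge> 2" and x: "x \<in> padic p" and a: "a \<in> padic p" and b: "b \<in> padic p"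
  shows "psub p x a \<in> pball p \<gamma> b \<longleftrightarrow> x \<in> pball p \<gamma> (padd p b a)"
proof -
  define m where "m = nat (-\<gamma>)"
  have "psub p x a \<in> pball p \<gamma> b \<longleftrightarrow> (psub p x a m - b m) * (of_nat p) powi \<gamma> \<in> \<int>"
    using pball_iff[OF p b, of \<gamma> m] psub_padic[OF p x a] m_def by simp
  also have "\<dots> \<longleftrightarrow> (x m - a m - b m) * (of_nat p) powi \<gamma> \<in> \<int>"
  proof (rule shift_Ints[OF p])
    show "psub p x a m - b m - (x m - a m - b m) = (of_nat p :: rat) ^ m * of_int (- \<lfloor>(x m - a m) / of_nat (p ^ m)\<rfloor>)"
      unfolding psub_def rmod_def by (simp add: of_nat_power)
  qed (simp add: m_def)
  also have "\<dots> \<longleftrightarrow> (x m - padd p b a m) * (of_nat p) powi \<gamma> \<in> \<int>"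
  proof (rule shift_Ints[OF p])
    show "x m - a m - b m - (x m - padd p b a m) = (of_nat p :: rat) ^ m * of_int (- \<lfloor>(b m + a m) / of_nat (p ^ m)\<rfloor>)"
      unfolding padd_def rmod_def by (simp add: of_nat_power)
  qed (simp add: m_def)
  also have "\<dots> \<longleftrightarrow> x \<in> pball p \<gamma> (padd p b a)"
    using pball_iff[OF p padd_padic[OF p b a], of \<gamma> m x] x m_def by simp
  finally show ?thesis .
qed

lemma pre_pdivp:
  assumes p: "p \<ge> 2" and x: "x \<in> padic p" and b: "b \<in> padic p"
  shows "pdivp p x \<in> pball p \<gamma> b \<longleftrightarrow> x \<in> pball p (\<gamma> - 1) (mulp p b)"
proof -
  define m where "m = nat (-\<gamma>)"
  have pp: "(of_nat p :: rat) > 0" using p by simp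
  have "pdivp p x \<in> pball p \<gamma> b \<longleftrightarrow> (pdivp p x m - b m) * (of_nat p) powi \<gamma> \<in> \<int>"
    using pball_iff[OF p b, of \<gamma> m] pdivp_padic[OF p x] m_def by simp
  also have "(pdivp p x m - b m) * (of_nat p) powi \<gamma> = (x (Suc m) - mulp p b (Suc m)) * (of_nat p) powi (\<gamma> - 1)"
  proof -
    have "(of_nat p :: rat) powi \<gamma> = (of_nat p) powi (\<gamma> - 1) * of_nat p"
      using powi_succ[OF p, of "\<gamma> - 1"] by simp
    then show ?thesis unfolding pdivp_def mulp_def using pp by (simp add: field_simps)
  qed
  also have "\<dots> \<in> \<int> \<longleftrightarrow> x \<in> pball p (\<gamma> - 1) (mulp p b)"
    using pball_iff[OF p mulp_padic[OF p b], of "\<gamma> - 1" "Suc m" x] x m_def by simp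
  finally show ?thesis .
qed

lemma pre_mulp:
  assumes p: "p \<ge> 2" and x: "x \<in> padic p" and b: "b \<in> padic p"
  shows "mulp p x \<in> pball p \<gamma> b \<longleftrightarrow> x \<in> pball p (\<gamma> + 1) (pdivp p b)"
proof -
  define m where "m = nat (-\<gamma>)"
  have pp: "(of_nat p :: rat) > 0" using p by simp
  have "mulp p x \<in> pball p \<gamma> b \<longleftrightarrow> (mulp p x (Suc m) - b (Suc m)) * (of_nat p) powi \<gamma> \<in> \<int>"
    using pball_iff[OF p b, of \<gamma> "Suc m"] mulp_padic[OF p x] m_def by simp
  also have "(mulp p x (Suc m) - b (Suc m)) * (of_nat p) powi \<gamma> = (x m - pdivp p b m) * (of_nat p) powi (\<gamma> + 1)"
    unfolding pdivp_def mulp_def powi_succ[OF p] using pp by (simp add: field_simps)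
  also have "\<dots> \<in> \<int> \<longleftrightarrow> x \<in> pball p (\<gamma> + 1) (pdivp p b)"
    using pball_iff[OF p pdivp_padic[OF p b], of "\<gamma> + 1" m x] x m_def by simp
  finally show ?thesis .
qed

lemma pball_subset: "pball p \<gamma> a \<subseteq> padic p"
  unfolding pball_def by auto

lemma pball_Int:
  assumes p: "p \<ge> 2" and a: "a \<in> padic p" and b: "b \<in> padic p" and g: "\<gamma> \<le> \<gamma>'"
  shows "pball p \<gamma> a \<inter> pball p \<gamma>' b = {} \<or> pball p \<gamma> a \<inter> pball p \<gamma>' b = pball p \<gamma> a"
proof (cases "pball p \<gamma> a \<inter> pball p \<gamma>' b = {}")
  case False
  then obtain y where y: "y \<in> pball p \<gamma> a" "y \<in> pball p \<gamma>' b" by blast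
  define m where "m = nat (-\<gamma>)"
  have m': "nat (-\<gamma>') \<le> m" using g m_def by simp
  have ya: "(y m - a m) * (of_nat p) powi \<gamma> \<in> \<int>" using y(1) pball_iff[OF p a, of \<gamma> m] m_def by simp
  have yb: "(y m - b m) * (of_nat p) powi \<gamma>' \<in> \<int>" using y(2) pball_iff[OF p b m'] by simp
  have "pball p \<gamma> a \<subseteq> pball p \<gamma>' b"
  proof
    fix x assume x: "x \<in> pball p \<gamma> a"
    have xa: "(x m - a m) * (of_nat p) powi \<gamma> \<in> \<int>" "x \<in> padic p" using x pball_iff[OF p a, of \<gamma> m] m_def by simp_all
    have "(x m - y m) * (of_nat p) powi \<gamma> \<in> \<int>" using Ints_diff[OF xa(1) ya] by (simp add: algebra_simps)
    then have "(x m - y m) * (of_nat p) powi \<gamma> * of_nat p ^ nat (\<gamma>' - \<gamma>) \<in> \<int>"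
      using Ints_mult[OF _ Ints_power[OF Ints_of_nat]] by blast
    then have "(x m - y m) * (of_nat p) powi \<gamma>' \<in> \<int>" using powi_shift[OF p g] by (simp add: mult.assoc)
    from Ints_add[OF this yb] have "(x m - b m) * (of_nat p) powi \<gamma>' \<in> \<int>" by (simp add: algebra_simps)
    then show "x \<in> pball p \<gamma>' b" using pball_iff[OF p b m'] xa(2) by simp
  qed
  then show ?thesis by blast
qed simp

lemma ball0_iff:
  assumes p: "p \<ge> 2"
  shows "x \<in> pball p (int n) pzero \<longleftrightarrow> x \<in> padic p \<and> x 0 * of_nat p ^ n \<in> \<int>"
  using pball_iff[OF p pzero_padic[OF p], of "int n" 0 x] by (simp add: pzero_def power_int_of_nat)

lemma padic_in_ball: assumes p: "p \<ge> 2" and x: "x \<in> padic p" shows "\<exists>i::nat. x \<in> pball p (int i) pzero"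
proof -
  obtain k where "(of_nat p :: rat) ^ k * x 0 \<in> \<int>" using padicD(3)[OF x] by blast
  then show ?thesis using ball0_iff[OF p] x by (auto simp: mult.commute)
qed

lemma psub0: "psub p x a 0 = x 0 - a 0 - of_int \<lfloor>x 0 - a 0\<rfloor>"
  unfolding psub_def rmod_def by simp

lemma ball_diff1:
  assumes p: "p \<ge> 2" and x: "x \<in> pball p (int (N+1)) pzero" and a: "a \<in> padic p"
    and s: "psub p x a \<in> pball p (int N) pzero"
  shows "a \<in> pball p (int (N+1)) pzero"
proof -
  define f where "f = \<lfloor>x 0 - a 0\<rfloor>"
  have x0: "x 0 * of_nat p ^ (N+1) \<in> \<int>" using x ball0_iff[OF p] by blast
  have "psub p x a 0 * of_nat p ^ N \<in> \<int>" using s ball0_iff[OF p] by blast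
  then have "(x 0 - a 0 - of_int f) * of_nat p ^ N \<in> \<int>" by (simp add: psub0 f_def)
  then have "(x 0 - a 0 - of_int f) * of_nat p ^ N * of_nat p \<in> \<int>" using Ints_mult[OF _ Ints_of_nat] by blast
  then have "(x 0 - a 0 - of_int f) * of_nat p ^ (N+1) \<in> \<int>" by (simp add: mult.assoc mult.commute)
  from Ints_diff[OF x0 this] have "(a 0 + of_int f) * of_nat p ^ (N+1) \<in> \<int>" by (simp add: algebra_simps)
  from Ints_diff[OF this, of "of_int (f * int p ^ (N+1))"] have "a 0 * of_nat p ^ (N+1) \<in> \<int>" by (simp add: algebra_simps)
  then show ?thesis using ball0_iff[OF p] a by blast
qed

lemma ball_diff2:
  assumes p: "p \<ge> 2" and x: "x \<in> padic p" and a: "a \<in> pball p (int (N+1)) pzero"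
    and s: "psub p x a \<in> pball p (int N) pzero"
  shows "x \<in> pball p (int (N+1)) pzero"
proof -
  define f where "f = \<lfloor>x 0 - a 0\<rfloor>"
  have a0: "a 0 * of_nat p ^ (N+1) \<in> \<int>" using a ball0_iff[OF p] by blast
  have "psub p x a 0 * of_nat p ^ N \<in> \<int>" using s ball0_iff[OF p] by blast
  then have "(x 0 - a 0 - of_int f) * of_nat p ^ N \<in> \<int>" by (simp add: psub0 f_def)
  then have "(x 0 - a 0 - of_int f) * of_nat p ^ N * of_nat p \<in> \<int>" using Ints_mult[OF _ Ints_of_nat] by blast
  then have "(x 0 - a 0 - of_int f) * of_nat p ^ (N+1) \<in> \<int>" by (simp add: mult.assoc mult.commute)
  from Ints_add[OF a0 this] have "(x 0 - of_int f) * of_nat p ^ (N+1) \<in> \<int>" by (simp add: algebra_simps)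
  from Ints_add[OF this, of "of_int (f * int p ^ (N+1))"] have "x 0 * of_nat p ^ (N+1) \<in> \<int>" by (simp add: algebra_simps)
  then show ?thesis using ball0_iff[OF p] x by blast
qed

definition ak :: "nat \<Rightarrow> nat \<Rightarrow> nat \<Rightarrow> (nat \<Rightarrow> rat)" where
  "ak p N k = padic_of_rat p (of_nat k / of_nat (p ^ (N + 1)))"

lemma ak0: assumes p: "p \<ge> 2" "k < p ^ (N+1)" shows "ak p N k 0 = of_nat k / of_nat (p ^ (N + 1))"
proof -
  have "(of_nat k :: rat) < of_nat (p ^ (N+1))" using assms(2) by (simp only: of_nat_less_iff)
  then show ?thesis unfolding ak_def padic_of_rat_def using p by (intro rmod_id) (auto simp: divide_less_eq)
qed

lemma ak_padic: assumes p: "p \<ge> 2" shows "ak p N k \<in> padic p"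
  unfolding ak_def using p by (intro padic_of_rat_padic[of _ "N+1"]) (auto simp: of_nat_power)

lemma ak_Ip: assumes p: "p \<ge> 2" "k < p ^ (N+1)" shows "ak p N k \<in> Ip p"
  unfolding Ip_def pfrac_def using ak_padic[OF p(1)] ak0[OF p] by (simp add: ak_def)

lemma ak_inj: assumes p: "p \<ge> 2" shows "inj_on (ak p N) {..<p ^ (N+1)}"
proof
  fix k l assume kl: "k \<in> {..<p ^ (N+1)}" "l \<in> {..<p ^ (N+1)}" and e: "ak p N k = ak p N l"
  have "ak p N k 0 = ak p N l 0" using e by simp
  then have "(of_nat k :: rat) / of_nat (p ^ (N + 1)) = of_nat l / of_nat (p ^ (N + 1))"
    using ak0[OF p, of k N] ak0[OF p, of l N] kl by auto
  then show "k = l" using p by simp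
qed

lemma ak_ball: assumes p: "p \<ge> 2" "k < p ^ (N+1)" shows "ak p N k \<in> pball p (int (N+1)) pzero"
proof -
  have pos: "(of_nat p :: rat) ^ (N+1) > 0" using p by simp
  have "ak p N k 0 * of_nat p ^ (N+1) = of_nat k" using ak0[OF p] pos p(1) by (simp add: of_nat_power)
  then have "ak p N k 0 * of_nat p ^ (N+1) \<in> \<int>" by simp
  then show ?thesis using ak_padic[OF p(1)] ball0_iff[OF p(1)] by blast
qed

lemma Ip_ball_ak:
  assumes p: "p \<ge> 2" and a: "a \<in> Ip p" and b: "a \<in> pball p (int (N+1)) pzero"
  shows "\<exists>k<p ^ (N+1). a = ak p N k"
proof -
  have ap: "a \<in> padic p" and af: "padic_of_rat p (a 0) = a" using a unfolding Ip_def pfrac_def by auto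
  have "a 0 * of_nat p ^ (N+1) \<in> \<int>" using b ball0_iff[OF p] by blast
  then obtain j where j: "a 0 * of_nat p ^ (N+1) = of_int j" by (auto elim: Ints_cases)
  have pos: "(of_nat p :: rat) ^ (N+1) > 0" using p by simp
  have "0 \<le> a 0" "a 0 < 1" using padicD(1,2)[OF ap, of 0] by auto
  then have "0 \<le> a 0 * of_nat p ^ (N+1)" "a 0 * of_nat p ^ (N+1) < 1 * of_nat p ^ (N+1)"
    using pos by (simp, intro mult_strict_right_mono) auto
  then have "(0::rat) \<le> of_int j" "of_int j < (of_int (int p ^ (N+1)) :: rat)" using j by simp_all
  then have j0: "0 \<le> j" "j < int p ^ (N+1)" by (simp_all only: of_int_le_iff of_int_less_iff of_int_0_le_iff)
  define k where "k = nat j"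
  have kl: "k < p ^ (N+1)" using j0 k_def by (simp add: nat_less_iff)
  have "a 0 = of_int j / (of_nat p ^ (N+1))" using j pos p by (simp add: eq_divide_eq)
  then have "a 0 = of_nat k / of_nat (p ^ (N+1))" using j0 k_def by (simp add: of_nat_power)
  then have "a = ak p N k" using af unfolding ak_def by simp
  then show ?thesis using kl by blast
qed




definition haarEx :: "nat \<Rightarrow> bool" where
  "haarEx p \<longleftrightarrow> (\<exists>\<mu>'. (\<forall>i\<in>{(\<gamma>, a). a \<in> padic p}. \<mu>' ((\<lambda>(\<gamma>, a). pball p \<gamma> a) i)
        = (\<lambda>(\<gamma>, a). ennreal (real p powr real_of_int \<gamma>)) i) \<and>
     measure_space (padic p) (sigma_sets (padic p) ((\<lambda>(\<gamma>, a). pball p \<gamma> a) ` {(\<gamma>, a). a \<in> padic p})) \<mu>')"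

definition Gset :: "nat \<Rightarrow> (nat \<Rightarrow> rat) set set" where
  "Gset p = (\<lambda>(\<gamma>, a). pball p \<gamma> a) ` {(\<gamma>, a). a \<in> padic p}"

lemma Gset_Pow: "Gset p \<subseteq> Pow (padic p)"
  unfolding Gset_def using pball_subset by auto

lemma Gset_iff: "X \<in> Gset p \<longleftrightarrow> (\<exists>\<gamma> a. a \<in> padic p \<and> X = pball p \<gamma> a)"
  unfolding Gset_def by auto

lemma space_haar: "space (haar p) = padic p"
  unfolding haar_def using Gset_Pow[of p] unfolding Gset_def by (rule space_extend_measure)

lemma sets_haar: "sets (haar p) = sigma_sets (padic p) (Gset p)"
  unfolding haar_def using Gset_Pow[of p] unfolding Gset_def by (rule sets_extend_measure)

lemma ball_sets: "a \<in> padic p \<Longrightarrow> pball p \<gamma> a \<in> sets (haar p)"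
  unfolding sets_haar using Gset_iff by blast

lemma haar_trivial:
  assumes "\<not> haarEx p"
  shows "emeasure (haar p) A = 0"
proof (cases "A \<in> sets (haar p)")
  case True
  have M: "haar p = measure_of (padic p) (Gset p) (\<lambda>_. 0)"
    using assms unfolding haar_def extend_measure_def haarEx_def Gset_def by auto
  show ?thesis
    by (rule emeasure_measure_of[OF M Gset_Pow]) (use True in \<open>auto simp: positive_def countably_additive_def\<close>)
qed (simp add: emeasure_notin_sets)

lemma haar_ball:
  assumes "haarEx p" "a \<in> padic p"
  shows "emeasure (haar p) (pball p \<gamma> a) = ennreal (real p powr real_of_int \<gamma>)"
proof -
  obtain \<mu>' where mu: "\<forall>i\<in>{(\<gamma>, a). a \<in> padic p}. \<mu>' ((\<lambda>(\<gamma>, a). pball p \<gamma> a) i)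
        = (\<lambda>(\<gamma>, a). ennreal (real p powr real_of_int \<gamma>)) i"
    and ms: "measure_space (padic p) (sigma_sets (padic p) ((\<lambda>(\<gamma>, a). pball p \<gamma> a) ` {(\<gamma>, a). a \<in> padic p})) \<mu>'"
    using assms(1) unfolding haarEx_def by blast
  have S: "sets (haar p) = sigma_sets (padic p) ((\<lambda>(\<gamma>, a). pball p \<gamma> a) ` {(\<gamma>, a). a \<in> padic p})"
    using sets_haar[of p] unfolding Gset_def .
  show ?thesis
  proof (rule emeasure_extend_measure_Pair[OF haar_def, where \<mu>' = \<mu>'])
    show "\<And>i j. j \<in> padic p \<Longrightarrow> \<mu>' (pball p i j) = ennreal (real p powr real_of_int i)"
      using mu by auto
    show "\<And>i j. j \<in> padic p \<Longrightarrow> pball p i j \<in> Pow (padic p)" using pball_subset by auto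
    show "positive (sets (haar p)) \<mu>'" "countably_additive (sets (haar p)) \<mu>'"
      using ms unfolding S measure_space_def by auto
  qed (rule assms(2))
qed

lemma AE_scale: "AE x in M. P x \<Longrightarrow> AE x in scale_measure r M. P x"
proof -
  assume "AE x in M. P x"
  then obtain N where N0: "{x \<in> space M. \<not> P x} \<subseteq> N" "emeasure M N = 0" "N \<in> sets M" by (rule AE_E)
  then have N: "N \<in> null_sets M" "{x \<in> space M. \<not> P x} \<subseteq> N" by auto
  have "N \<in> null_sets (scale_measure r M)" using N(1) by (auto simp: null_sets_def)
  then show ?thesis using N(2) by (intro AE_I'[of N]) (auto simp: space_scale_measure)
qed

lemma Int_stable_G: "p \<ge> 2 \<Longrightarrow> Int_stable (insert {} (Gset p))"
  unfolding Int_stable_def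
proof (intro ballI)
  fix X Y assume p: "p \<ge> 2" and X: "X \<in> insert {} (Gset p)" and Y: "Y \<in> insert {} (Gset p)"
  show "X \<inter> Y \<in> insert {} (Gset p)"
  proof (cases "X = {} \<or> Y = {}")
    case False
    then obtain \<gamma> a \<gamma>' b where a: "a \<in> padic p" "X = pball p \<gamma> a" and b: "b \<in> padic p" "Y = pball p \<gamma>' b"
      using X Y Gset_iff by auto
    show ?thesis
    proof (cases "\<gamma> \<le> \<gamma>'")
      case True
      have "X \<inter> Y = {} \<or> X \<inter> Y = X" using pball_Int[OF p a(1) b(1) True] a b by simp
      then show ?thesis using a X by auto
    next
      case False
      then have g: "\<gamma>' \<le> \<gamma>" by simp
      have "Y \<inter> X = {} \<or> Y \<inter> X = Y" using pball_Int[OF p b(1) a(1) g] a b by simp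
      then have "X \<inter> Y = {} \<or> X \<inter> Y = Y" by (simp add: Int_commute)
      then show ?thesis using b Y by auto
    qed
  qed auto
qed

lemma haar_distr:
  assumes p: "p \<ge> 2" and E: "haarEx p" and T: "\<And>x. x \<in> padic p \<Longrightarrow> T x \<in> padic p"
    and pre: "\<And>\<gamma> b. b \<in> padic p \<Longrightarrow> \<exists>b'\<in>padic p. T -` pball p \<gamma> b \<inter> padic p = pball p (\<gamma> + \<delta>) b'"
  shows "T \<in> haar p \<rightarrow>\<^sub>M haar p"
    and "distr (haar p) (haar p) T = scale_measure (ennreal (real p powr real_of_int \<delta>)) (haar p)"
proof -
  show meas: "T \<in> haar p \<rightarrow>\<^sub>M haar p"
  proof (rule measurable_sigma_sets[OF sets_haar Gset_Pow])
    show "T \<in> space (haar p) \<rightarrow> padic p" using T by (auto simp: space_haar)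
    fix Y assume "Y \<in> Gset p"
    then obtain \<gamma> b where b: "b \<in> padic p" "Y = pball p \<gamma> b" using Gset_iff by blast
    obtain b' where "b' \<in> padic p" "T -` Y \<inter> padic p = pball p (\<gamma> + \<delta>) b'" using pre[OF b(1)] b by blast
    then show "T -` Y \<inter> space (haar p) \<in> sets (haar p)" using ball_sets by (simp add: space_haar)
  qed
  have sig: "sigma_sets (padic p) (insert {} (Gset p)) = sigma_sets (padic p) (Gset p)"
  proof
    show "sigma_sets (padic p) (insert {} (Gset p)) \<subseteq> sigma_sets (padic p) (Gset p)"
      by (rule sigma_sets_mono) (auto intro: sigma_sets.Empty sigma_sets.Basic)
    show "sigma_sets (padic p) (Gset p) \<subseteq> sigma_sets (padic p) (insert {} (Gset p))"
      by (rule sigma_sets_mono') auto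
  qed
  show "distr (haar p) (haar p) T = scale_measure (ennreal (real p powr real_of_int \<delta>)) (haar p)"
  proof (rule measure_eqI_generator_eq[OF Int_stable_G[OF p], of "padic p" _ _ "\<lambda>i. pball p (int i) pzero"])
    show "insert {} (Gset p) \<subseteq> Pow (padic p)" using Gset_Pow by auto
    show "sets (distr (haar p) (haar p) T) = sigma_sets (padic p) (insert {} (Gset p))"
      unfolding sets_distr sig by (rule sets_haar)
    show "sets (scale_measure (ennreal (real p powr real_of_int \<delta>)) (haar p)) = sigma_sets (padic p) (insert {} (Gset p))"
      unfolding sets_scale_measure sig by (rule sets_haar)
    show "range (\<lambda>i. pball p (int i) pzero) \<subseteq> insert {} (Gset p)"
    proof (intro subsetI)
      fix X assume "X \<in> range (\<lambda>i. pball p (int i) pzero)"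
      then obtain i where i: "X = pball p (int i) pzero" by blast
      have "pball p (int i) pzero \<in> Gset p" unfolding Gset_def
        using pzero_padic[OF p] by (intro image_eqI[of _ _ "(int i, pzero)"]) auto
      then show "X \<in> insert {} (Gset p)" using i by simp
    qed
    show "(\<Union>i. pball p (int i) pzero) = padic p"
    proof (intro equalityI subsetI)
      fix x assume "x \<in> (\<Union>i. pball p (int i) pzero)"
      then show "x \<in> padic p" using pball_subset by blast
    next
      fix x assume "x \<in> padic p"
      then obtain i where "x \<in> pball p (int i) pzero" using padic_in_ball[OF p] by blast
      then show "x \<in> (\<Union>i. pball p (int i) pzero)" by blast
    qed
    fix X assume X: "X \<in> insert {} (Gset p)"
    show "emeasure (distr (haar p) (haar p) T) X = emeasure (scale_measure (ennreal (real p powr real_of_int \<delta>)) (haar p)) X"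
    proof (cases "X = {}")
      case False
      then have "X \<in> Gset p" using X by blast
      then obtain \<gamma> b where b: "b \<in> padic p" "X = pball p \<gamma> b" unfolding Gset_iff by blast
      obtain b' where b': "b' \<in> padic p" "T -` X \<inter> padic p = pball p (\<gamma> + \<delta>) b'" using pre[OF b(1)] b(2) by blast
      have "emeasure (distr (haar p) (haar p) T) X = emeasure (haar p) (T -` X \<inter> space (haar p))"
        using b ball_sets[OF b(1)] by (intro emeasure_distr[OF meas]) simp
      also have "\<dots> = ennreal (real p powr real_of_int (\<gamma> + \<delta>))"
        unfolding space_haar b'(2) by (rule haar_ball[OF E b'(1)])
      also have "\<dots> = ennreal (real p powr real_of_int \<delta>) * ennreal (real p powr real_of_int \<gamma>)"
        by (simp add: powr_add ennreal_mult' mult.commute)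
      also have "\<dots> = emeasure (scale_measure (ennreal (real p powr real_of_int \<delta>)) (haar p)) X"
        unfolding emeasure_scale_measure b(2) haar_ball[OF E b(1)] ..
      finally show ?thesis .
    qed simp
  next
    fix i :: nat
    obtain b' where b': "b' \<in> padic p" "T -` pball p (int i) pzero \<inter> padic p = pball p (int i + \<delta>) b'"
      using pre[OF pzero_padic[OF p]] by blast
    have "emeasure (distr (haar p) (haar p) T) (pball p (int i) pzero) = emeasure (haar p) (T -` pball p (int i) pzero \<inter> space (haar p))"
      using ball_sets[OF pzero_padic[OF p]] by (intro emeasure_distr[OF meas]) simp
    also have "\<dots> = ennreal (real p powr real_of_int (int i + \<delta>))"
      unfolding space_haar b'(2) by (rule haar_ball[OF E b'(1)])
    finally show "emeasure (distr (haar p) (haar p) T) (pball p (int i) pzero) \<noteq> \<infinity>" by simp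
  qed
qed

lemma haar_AE_transfer:
  assumes p: "p \<ge> 2" and E: "haarEx p" and T: "\<And>x. x \<in> padic p \<Longrightarrow> T x \<in> padic p"
    and pre: "\<And>\<gamma> b. b \<in> padic p \<Longrightarrow> \<exists>b'\<in>padic p. T -` pball p \<gamma> b \<inter> padic p = pball p (\<gamma> + \<delta>) b'"
    and ae: "AE x in haar p. P x"
  shows "AE x in haar p. P (T x)"
  using haar_distr[OF p E T pre] AE_scale[OF ae] AE_distrD by metis

lemma pre_psub_ex:
  assumes p: "p \<ge> 2" and a: "a \<in> padic p" and b: "b \<in> padic p"
  shows "\<exists>b'\<in>padic p. (\<lambda>x. psub p x a) -` pball p \<gamma> b \<inter> padic p = pball p (\<gamma> + 0) b'"
  using pre_psub[OF p _ a b] padd_padic[OF p b a] pball_subset[THEN subsetD] by (intro bexI[of _ "padd p b a"]) auto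

lemma pre_pdivp_ex:
  assumes p: "p \<ge> 2" and b: "b \<in> padic p"
  shows "\<exists>b'\<in>padic p. pdivp p -` pball p \<gamma> b \<inter> padic p = pball p (\<gamma> + (-1)) b'"
  using pre_pdivp[OF p _ b] mulp_padic[OF p b] pball_subset[THEN subsetD] by (intro bexI[of _ "mulp p b"]) auto

lemma pre_mulp_ex:
  assumes p: "p \<ge> 2" and b: "b \<in> padic p"
  shows "\<exists>b'\<in>padic p. mulp p -` pball p \<gamma> b \<inter> padic p = pball p (\<gamma> + 1) b'"
  using pre_mulp[OF p _ b] pdivp_padic[OF p b] pball_subset[THEN subsetD] by (intro bexI[of _ "pdivp p b"]) auto




locale semin =
  fixes L :: "('a \<Rightarrow> complex) set" and nrm :: "('a \<Rightarrow> complex) \<Rightarrow> real"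
  assumes addL: "\<And>f g. f \<in> L \<Longrightarrow> g \<in> L \<Longrightarrow> (\<lambda>x. f x + g x) \<in> L"
    and scaleL: "\<And>c f. f \<in> L \<Longrightarrow> (\<lambda>x. c * f x) \<in> L"
    and zeroL: "(\<lambda>x. 0) \<in> L"
    and tri: "\<And>f g. f \<in> L \<Longrightarrow> g \<in> L \<Longrightarrow> nrm (\<lambda>x. f x + g x) \<le> nrm f + nrm g"
    and hom: "\<And>c f. f \<in> L \<Longrightarrow> nrm (\<lambda>x. c * f x) = cmod c * nrm f"
    and nn: "\<And>f. nrm f \<ge> 0"
begin

lemma diffL: "f \<in> L \<Longrightarrow> g \<in> L \<Longrightarrow> (\<lambda>x. f x - g x) \<in> L"
  using addL[of f "\<lambda>x. (-1) * g x"] scaleL[of g "-1"] by simp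

lemma tri_diff: "f \<in> L \<Longrightarrow> g \<in> L \<Longrightarrow> nrm (\<lambda>x. f x - g x) \<le> nrm f + nrm g"
  using tri[of f "\<lambda>x. (-1) * g x"] scaleL[of g "-1"] hom[of g "-1"] by simp

lemma sumL: "finite K \<Longrightarrow> (\<forall>k\<in>K. \<psi> k \<in> L) \<Longrightarrow> (\<lambda>x. \<Sum>k\<in>K. c k * \<psi> k x) \<in> L"
proof (induction K rule: finite_induct)
  case empty then show ?case using zeroL by simp
next
  case (insert j K)
  then have "(\<lambda>x. c j * \<psi> j x + (\<Sum>k\<in>K. c k * \<psi> k x)) \<in> L"
    using addL scaleL by simp
  then show ?case using insert(1,2) by simp
qed

lemma findim:
  "finite K \<Longrightarrow> (\<forall>k\<in>K. \<psi> k \<in> L) \<Longrightarrow> f \<in> L \<Longrightarrow>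
   (\<forall>e>0. \<exists>c. nrm (\<lambda>x. f x - (\<Sum>k\<in>K. c k * \<psi> k x)) < e) \<Longrightarrow>
   \<exists>c. nrm (\<lambda>x. f x - (\<Sum>k\<in>K. c k * \<psi> k x)) = 0"
proof (induction K arbitrary: f rule: finite_induct)
  case empty
  then have "\<forall>e>0. nrm f < e" by simp
  then have "nrm f = 0" using nn[of f] by (metis less_eq_real_def not_less)
  then show ?case by simp
next
  case (insert j K)
  define S where "S c = (\<lambda>x. \<Sum>k\<in>K. c k * \<psi> k x)" for c
  have psiK: "\<forall>k\<in>K. \<psi> k \<in> L" and psij: "\<psi> j \<in> L" using insert(4) by auto
  have SL: "S c \<in> L" for c unfolding S_def using sumL[OF insert(1) psiK] .
  have ins: "(\<Sum>k\<in>insert j K. c k * \<psi> k x) = c j * \<psi> j x + S c x" for c x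
    unfolding S_def using insert(1,2) by simp
  have hyp: "\<forall>e>0. \<exists>c. nrm (\<lambda>x. f x - (c j * \<psi> j x + S c x)) < e"
    using insert(6) unfolding ins .
  have IH: "\<And>g. g \<in> L \<Longrightarrow> (\<forall>e>0. \<exists>c. nrm (\<lambda>x. g x - S c x) < e) \<Longrightarrow> \<exists>c. nrm (\<lambda>x. g x - S c x) = 0"
    using insert(3)[OF psiK] unfolding S_def by blast
  have ScL: "(\<lambda>x. c * \<psi> j x + S d x) \<in> L" for c d using addL[OF scaleL[OF psij] SL] .
  show ?case
  proof (cases "\<exists>c0. nrm (\<lambda>x. \<psi> j x - S c0 x) = 0")
    case True
    then obtain c0 where c0: "nrm (\<lambda>x. \<psi> j x - S c0 x) = 0" by blast
    have "\<forall>e>0. \<exists>c. nrm (\<lambda>x. f x - S c x) < e"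
    proof (intro allI impI)
      fix e :: real assume e: "e > 0"
      obtain c where c: "nrm (\<lambda>x. f x - (c j * \<psi> j x + S c x)) < e" using hyp e by blast
      define c' where "c' k = c k + c j * c0 k" for k
      have eq: "(\<lambda>x. f x - S c' x) = (\<lambda>x. (f x - (c j * \<psi> j x + S c x)) + c j * (\<psi> j x - S c0 x))"
        unfolding S_def c'_def by (rule ext) (simp add: sum.distrib sum_distrib_left algebra_simps)
      have A: "(\<lambda>x. f x - (c j * \<psi> j x + S c x)) \<in> L" using diffL[OF insert(5) ScL] .
      have B: "(\<lambda>x. \<psi> j x - S c0 x) \<in> L" using diffL[OF psij SL] .
      have "nrm (\<lambda>x. f x - S c' x) \<le> nrm (\<lambda>x. f x - (c j * \<psi> j x + S c x)) + nrm (\<lambda>x. c j * (\<psi> j x - S c0 x))"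
        unfolding eq using tri[OF A scaleL[OF B]] .
      also have "nrm (\<lambda>x. c j * (\<psi> j x - S c0 x)) = 0" using hom[OF B] c0 by simp
      finally show "\<exists>c. nrm (\<lambda>x. f x - S c x) < e" using c by (intro exI[of _ c']) simp
    qed
    then obtain c1 where c1: "nrm (\<lambda>x. f x - S c1 x) = 0" using IH[OF insert(5)] by blast
    have "(\<Sum>k\<in>insert j K. (c1(j := 0)) k * \<psi> k x) = S c1 x" for x
    proof -
      have "(\<Sum>k\<in>K. (c1(j := 0)) k * \<psi> k x) = (\<Sum>k\<in>K. c1 k * \<psi> k x)"
        using insert(2) by (intro sum.cong) auto
      then show ?thesis unfolding ins S_def by simp
    qed
    then show ?thesis using c1 by (intro exI[of _ "c1(j := 0)"]) simp
  next
    case False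
    have "\<not> (\<forall>e>0. \<exists>c. nrm (\<lambda>x. \<psi> j x - S c x) < e)" using IH[OF psij] False by blast
    then obtain d where d: "d > 0" "\<And>c. nrm (\<lambda>x. \<psi> j x - S c x) \<ge> d" by (auto simp: not_less)
    have "\<forall>n::nat. \<exists>c. nrm (\<lambda>x. f x - (c j * \<psi> j x + S c x)) < 1 / Suc n"
      using hyp by simp
    then obtain C where C: "\<And>n::nat. nrm (\<lambda>x. f x - (C n j * \<psi> j x + S (C n) x)) < 1 / Suc n"
      by metis
    define t where "t n = C n j" for n
    define g where "g n = (\<lambda>x. f x - (t n * \<psi> j x + S (C n) x))" for n
    have gL: "g n \<in> L" for n unfolding g_def using diffL[OF insert(5) ScL] .
    have gn: "nrm (g n) < 1 / Suc n" for n using C[of n] unfolding g_def t_def .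
    have key: "cmod (t m - t n) * d \<le> 1 / Suc m + 1 / Suc n" for m n
    proof (cases "t m = t n")
      case True then show ?thesis by simp
    next
      case False
      define u where "u = t m - t n"
      have u: "u \<noteq> 0" using False u_def by simp
      define c' where "c' k = (C n k - C m k) / u" for k
      have eq: "(\<lambda>x. g n x - g m x) = (\<lambda>x. u * (\<psi> j x - S c' x))"
      proof
        fix x
        have "S c' x = (S (C n) x - S (C m) x) / u"
          unfolding S_def c'_def by (simp add: sum_divide_distrib sum_subtractf diff_divide_distrib algebra_simps)
        then show "g n x - g m x = u * (\<psi> j x - S c' x)"
          unfolding g_def u_def using u u_def by (simp add: field_simps)
      qed
      have "cmod u * d \<le> cmod u * nrm (\<lambda>x. \<psi> j x - S c' x)"
        using d(2)[of c'] by (simp add: mult_left_mono)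
      also have "\<dots> = nrm (\<lambda>x. g n x - g m x)" unfolding eq using hom[OF diffL[OF psij SL]] by simp
      also have "\<dots> \<le> nrm (g n) + nrm (g m)" using tri_diff[OF gL gL] .
      also have "\<dots> \<le> 1 / Suc m + 1 / Suc n" using gn[of n] gn[of m] by simp
      finally show ?thesis unfolding u_def .
    qed
    have "Cauchy t"
    proof (rule CauchyI)
      fix e :: real assume e: "e > 0"
      obtain M :: nat where M: "2 / (d * e) < M" using reals_Archimedean2 by blast
      have Mpos: "M > 0" using M d e by (metis divide_pos_pos less_trans mult_pos_pos of_nat_0_less_iff zero_less_numeral)
      show "\<exists>M. \<forall>m\<ge>M. \<forall>n\<ge>M. norm (t m - t n) < e"
      proof (intro exI[of _ M] allI impI)
        fix m n assume mn: "M \<le> m" "M \<le> n"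
        have "1 / real (Suc m) \<le> 1 / M" using mn Mpos by (simp add: frac_le)
        moreover have "1 / real (Suc n) \<le> 1 / M" using mn Mpos by (simp add: frac_le)
        ultimately have "cmod (t m - t n) * d \<le> 2 / M" using key[of m n] by simp
        also have "2 / M < d * e" using M d e Mpos by (simp add: field_simps)
        finally show "norm (t m - t n) < e" using d by (simp add: mult.commute)
      qed
    qed
    then obtain \<tau> where tau: "t \<longlonglongrightarrow> \<tau>" using Cauchy_convergent convergent_def by blast
    define f' where "f' = (\<lambda>x. f x - \<tau> * \<psi> j x)"
    have f'L: "f' \<in> L" unfolding f'_def using diffL[OF insert(5) scaleL[OF psij]] .
    have "\<forall>e>0. \<exists>c. nrm (\<lambda>x. f' x - S c x) < e"
    proof (intro allI impI)
      fix e :: real assume e: "e > 0"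
      have r: "e / (2 * (nrm (\<psi> j) + 1)) > 0" using e nn[of "\<psi> j"] by (simp add: add_nonneg_pos)
      obtain n1 where n1: "\<forall>n\<ge>n1. norm (t n - \<tau>) < e / (2 * (nrm (\<psi> j) + 1))"
        using LIMSEQ_D[OF tau r] by blast
      obtain n2 where n2: "inverse (of_nat (Suc n2)) < e / 2" using reals_Archimedean[of "e/2"] e by auto
      define n where "n = max n1 n2"
      have a: "nrm (g n) < e / 2"
      proof -
        have "1 / real (Suc n) \<le> 1 / real (Suc n2)" unfolding n_def by (simp add: frac_le)
        then show ?thesis using gn[of n] n2 by (simp add: inverse_eq_divide)
      qed
      have b: "cmod (t n - \<tau>) * nrm (\<psi> j) \<le> e / 2"
      proof -
        have lt: "cmod (t n - \<tau>) < e / (2 * (nrm (\<psi> j) + 1))" using n1 n_def by simp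
        have "cmod (t n - \<tau>) * nrm (\<psi> j) \<le> e / (2 * (nrm (\<psi> j) + 1)) * (nrm (\<psi> j) + 1)"
          using lt nn[of "\<psi> j"] r by (intro mult_mono) auto
        also have "\<dots> = e / 2" using nn[of "\<psi> j"] by (simp add: field_simps)
        finally show ?thesis .
      qed
      have eq: "(\<lambda>x. f' x - S (C n) x) = (\<lambda>x. g n x + (t n - \<tau>) * \<psi> j x)"
        unfolding f'_def g_def by (rule ext) (simp add: algebra_simps)
      have "nrm (\<lambda>x. f' x - S (C n) x) \<le> nrm (g n) + cmod (t n - \<tau>) * nrm (\<psi> j)"
        unfolding eq using tri[OF gL scaleL[OF psij]] hom[OF psij] by simp
      also have "\<dots> < e" using a b by simp
      finally show "\<exists>c. nrm (\<lambda>x. f' x - S c x) < e" by blast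
    qed
    then obtain c1 where c1: "nrm (\<lambda>x. f' x - S c1 x) = 0" using IH[OF f'L] by blast
    have "(\<lambda>x. f x - (\<Sum>k\<in>insert j K. (c1(j := \<tau>)) k * \<psi> k x)) = (\<lambda>x. f' x - S c1 x)"
    proof
      fix x
      have "(\<Sum>k\<in>K. (c1(j := \<tau>)) k * \<psi> k x) = S c1 x"
        unfolding S_def using insert(2) by (intro sum.cong) auto
      then show "f x - (\<Sum>k\<in>insert j K. (c1(j := \<tau>)) k * \<psi> k x) = f' x - S c1 x"
        using insert(1,2) unfolding f'_def by (simp add: algebra_simps)
    qed
    then show ?thesis using c1 by metis
  qed
qed

end




lemma CS_real:
  fixes A B C :: real
  assumes A: "A \<ge> 0" and B: "B \<ge> 0" and h: "\<And>t. t > 0 \<Longrightarrow> 2 * C \<le> t * A + B / t"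
  shows "C \<le> sqrt A * sqrt B"
proof (rule ccontr)
  assume c: "\<not> C \<le> sqrt A * sqrt B"
  then have Cpos: "C > 0" using A B by (smt (verit) real_sqrt_ge_zero mult_nonneg_nonneg)
  show False
  proof (cases "A = 0")
    case True
    have t: "(B + 1) / C > 0" using Cpos B by simp
    have "2 * C \<le> B / ((B + 1) / C)" using h[OF t] True by simp
    also have "\<dots> = B * C / (B + 1)" by simp
    also have "\<dots> < C" using Cpos B by (simp add: field_simps)
    finally show False using Cpos by simp
  next
    case A0: False
    show False
    proof (cases "B = 0")
      case True
      have t: "C / (A + 1) > 0" using Cpos A by simp
      have "2 * C \<le> C / (A + 1) * A" using h[OF t] True by simp
      also have "\<dots> < C" using Cpos A by (simp add: field_simps)
      finally show False using Cpos by simp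
    next
      case False
      have sA: "sqrt A > 0" and sB: "sqrt B > 0" using A0 False A B by auto
      have t: "sqrt B / sqrt A > 0" using sA sB by simp
      have "2 * C \<le> sqrt B / sqrt A * A + B / (sqrt B / sqrt A)" using h[OF t] .
      also have "sqrt B / sqrt A * A = sqrt A * sqrt B"
        using sA A by (simp add: field_simps)
      also have "B / (sqrt B / sqrt A) = sqrt A * sqrt B"
        using sB B by (simp add: field_simps)
      finally show False using c by simp
    qed
  qed
qed

definition L2m :: "'a measure \<Rightarrow> ('a \<Rightarrow> complex) set" where
  "L2m M = {f. f \<in> borel_measurable M \<and> integrable M (\<lambda>x. (cmod (f x))\<^sup>2)}"

definition nrmM :: "'a measure \<Rightarrow> ('a \<Rightarrow> complex) \<Rightarrow> real" where
  "nrmM M f = sqrt (\<integral>x. (cmod (f x))\<^sup>2 \<partial>M)"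

lemma L2m_prod_int:
  assumes f: "f \<in> L2m M" and g: "g \<in> L2m M"
  shows "integrable M (\<lambda>x. cmod (f x) * cmod (g x))"
proof (rule Bochner_Integration.integrable_bound)
  show "integrable M (\<lambda>x. (cmod (f x))\<^sup>2 + (cmod (g x))\<^sup>2)" using f g unfolding L2m_def by auto
  show "(\<lambda>x. cmod (f x) * cmod (g x)) \<in> borel_measurable M" using f g unfolding L2m_def by (auto intro!: borel_measurable_times borel_measurable_norm)
  show "AE x in M. norm (cmod (f x) * cmod (g x)) \<le> norm ((cmod (f x))\<^sup>2 + (cmod (g x))\<^sup>2)"
  proof (intro AE_I2)
    fix x
    have "cmod (f x) * cmod (g x) \<le> (cmod (f x))\<^sup>2 + (cmod (g x))\<^sup>2"
      by (smt (verit) norm_ge_zero power2_eq_square mult_mono sum_squares_ge_zero zero_le_power2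
          power2_diff mult_nonneg_nonneg)
    then show "norm (cmod (f x) * cmod (g x)) \<le> norm ((cmod (f x))\<^sup>2 + (cmod (g x))\<^sup>2)" by simp
  qed
qed

lemma L2m_semin: "semin (L2m M) (nrmM M)"
proof
  fix f g assume f: "f \<in> L2m M" and g: "g \<in> L2m M"
  have fm: "f \<in> borel_measurable M" and gm: "g \<in> borel_measurable M"
    and fi: "integrable M (\<lambda>x. (cmod (f x))\<^sup>2)" and gi: "integrable M (\<lambda>x. (cmod (g x))\<^sup>2)"
    using f g unfolding L2m_def by auto
  have pi: "integrable M (\<lambda>x. cmod (f x) * cmod (g x))" using L2m_prod_int[OF f g] .
  have pw: "(cmod (f x + g x))\<^sup>2 \<le> (cmod (f x))\<^sup>2 + 2 * (cmod (f x) * cmod (g x)) + (cmod (g x))\<^sup>2" for x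
  proof -
    have "cmod (f x + g x) \<le> cmod (f x) + cmod (g x)" by (rule norm_triangle_ineq)
    then have "(cmod (f x + g x))\<^sup>2 \<le> (cmod (f x) + cmod (g x))\<^sup>2" by (intro power_mono) auto
    then show ?thesis by (simp add: power2_sum)
  qed
  have bi: "integrable M (\<lambda>x. (cmod (f x))\<^sup>2 + 2 * (cmod (f x) * cmod (g x)) + (cmod (g x))\<^sup>2)"
    using fi gi pi by auto
  have si: "integrable M (\<lambda>x. (cmod (f x + g x))\<^sup>2)"
    by (rule Bochner_Integration.integrable_bound[OF bi]) (use fm gm pw in \<open>auto intro!: AE_I2 simp: abs_le_iff\<close>)
  show "(\<lambda>x. f x + g x) \<in> L2m M" using fm gm si unfolding L2m_def by auto
  define A where "A = (\<integral>x. (cmod (f x))\<^sup>2 \<partial>M)"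
  define B where "B = (\<integral>x. (cmod (g x))\<^sup>2 \<partial>M)"
  define C where "C = (\<integral>x. cmod (f x) * cmod (g x) \<partial>M)"
  have A0: "A \<ge> 0" and B0: "B \<ge> 0" unfolding A_def B_def by auto
  have CS: "C \<le> sqrt A * sqrt B"
  proof (rule CS_real[OF A0 B0])
    fix t :: real assume t: "t > 0"
    have "(\<integral>x. 2 * (cmod (f x) * cmod (g x)) \<partial>M) \<le> (\<integral>x. t * (cmod (f x))\<^sup>2 + (cmod (g x))\<^sup>2 / t \<partial>M)"
    proof (rule integral_mono)
      show "integrable M (\<lambda>x. 2 * (cmod (f x) * cmod (g x)))" using pi by simp
      show "integrable M (\<lambda>x. t * (cmod (f x))\<^sup>2 + (cmod (g x))\<^sup>2 / t)" using fi gi by auto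
      fix x
      have "0 \<le> (t * cmod (f x) - cmod (g x))\<^sup>2" by simp
      then have "2 * t * (cmod (f x) * cmod (g x)) \<le> t * t * (cmod (f x))\<^sup>2 + (cmod (g x))\<^sup>2"
        by (simp add: power2_diff power2_eq_square algebra_simps)
      then show "2 * (cmod (f x) * cmod (g x)) \<le> t * (cmod (f x))\<^sup>2 + (cmod (g x))\<^sup>2 / t"
        using t by (simp add: field_simps power2_eq_square)
    qed
    then show "2 * C \<le> t * A + B / t" unfolding A_def B_def C_def using fi gi pi by simp
  qed
  have "(\<integral>x. (cmod (f x + g x))\<^sup>2 \<partial>M) \<le> (\<integral>x. (cmod (f x))\<^sup>2 + 2 * (cmod (f x) * cmod (g x)) + (cmod (g x))\<^sup>2 \<partial>M)"
    by (rule integral_mono[OF si bi pw])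
  also have "\<dots> = A + 2 * C + B" unfolding A_def B_def C_def using fi gi pi by simp
  also have "\<dots> \<le> (sqrt A + sqrt B)\<^sup>2" using CS A0 B0 by (simp add: power2_sum)
  finally have "sqrt (\<integral>x. (cmod (f x + g x))\<^sup>2 \<partial>M) \<le> sqrt ((sqrt A + sqrt B)\<^sup>2)" by (rule real_sqrt_le_mono)
  also have "\<dots> = sqrt A + sqrt B" using A0 B0 by simp
  finally show "nrmM M (\<lambda>x. f x + g x) \<le> nrmM M f + nrmM M g" unfolding nrmM_def A_def B_def .
next
  fix c :: complex and f assume f: "f \<in> L2m M"
  then have fm: "f \<in> borel_measurable M" and fi: "integrable M (\<lambda>x. (cmod (f x))\<^sup>2)" unfolding L2m_def by auto
  have eq: "(\<lambda>x. (cmod (c * f x))\<^sup>2) = (\<lambda>x. (cmod c)\<^sup>2 * (cmod (f x))\<^sup>2)" by (simp add: norm_mult power_mult_distrib)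
  show "(\<lambda>x. c * f x) \<in> L2m M" unfolding L2m_def using fm fi eq by auto
  show "nrmM M (\<lambda>x. c * f x) = cmod c * nrmM M f" unfolding nrmM_def eq by (simp add: real_sqrt_mult)
next
  show "(\<lambda>x. 0) \<in> L2m M" unfolding L2m_def by simp
next
  fix f show "nrmM M f \<ge> 0" unfolding nrmM_def by simp
qed




lemma L2_eq: "L2 p = L2m (haar p)"
  unfolding L2_def L2m_def ..

lemma l2dist_eq: "l2dist p f g = nrmM (haar p) (\<lambda>x. f x - g x)"
  unfolding l2dist_def nrmM_def ..

lemma transl:
  assumes p: "p \<ge> 2" and E: "haarEx p" and a: "a \<in> padic p"
  shows "(\<lambda>x. psub p x a) \<in> haar p \<rightarrow>\<^sub>M haar p" "distr (haar p) (haar p) (\<lambda>x. psub p x a) = haar p"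
proof -
  have T: "\<And>x. x \<in> padic p \<Longrightarrow> psub p x a \<in> padic p" using psub_padic[OF p _ a] .
  have pre: "\<And>\<gamma> b. b \<in> padic p \<Longrightarrow> \<exists>b'\<in>padic p. (\<lambda>x. psub p x a) -` pball p \<gamma> b \<inter> padic p = pball p (\<gamma> + 0) b'"
    using pre_psub_ex[OF p a] .
  show "(\<lambda>x. psub p x a) \<in> haar p \<rightarrow>\<^sub>M haar p" using haar_distr(1)[OF p E T pre] .
  have "distr (haar p) (haar p) (\<lambda>x. psub p x a) = scale_measure (ennreal (real p powr real_of_int 0)) (haar p)"
    using haar_distr(2)[OF p E T pre] .
  also have "\<dots> = haar p" using p by simp
  finally show "distr (haar p) (haar p) (\<lambda>x. psub p x a) = haar p" .
qed

lemma transl_AE: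
  assumes p: "p \<ge> 2" and E: "haarEx p" and a: "a \<in> padic p" and ae: "AE x in haar p. P x"
  shows "AE x in haar p. P (psub p x a)"
  using haar_AE_transfer[OF p E psub_padic[OF p _ a] pre_psub_ex[OF p a] ae] .

lemma pdivp_AE:
  assumes p: "p \<ge> 2" and E: "haarEx p" and ae: "AE x in haar p. P x"
  shows "AE x in haar p. P (pdivp p x)"
  using haar_AE_transfer[OF p E pdivp_padic[OF p] pre_pdivp_ex[OF p] ae] .

lemma mulp_AE:
  assumes p: "p \<ge> 2" and E: "haarEx p" and ae: "AE x in haar p. P x"
  shows "AE x in haar p. P (mulp p x)"
  using haar_AE_transfer[OF p E mulp_padic[OF p] pre_mulp_ex[OF p] ae] .

lemma transl_L2:
  assumes p: "p \<ge> 2" and E: "haarEx p" and a: "a \<in> padic p" and phi: "\<phi> \<in> L2m (haar p)"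
  shows "(\<lambda>x. \<phi> (psub p x a)) \<in> L2m (haar p)"
proof -
  have pm: "\<phi> \<in> borel_measurable (haar p)" and pi: "integrable (haar p) (\<lambda>x. (cmod (\<phi> x))\<^sup>2)"
    using phi unfolding L2m_def by auto
  note Tm = transl(1)[OF p E a] and Td = transl(2)[OF p E a]
  have "(\<lambda>x. \<phi> (psub p x a)) \<in> borel_measurable (haar p)" using measurable_compose[OF Tm pm] by (simp add: o_def)
  moreover have "integrable (haar p) (\<lambda>x. (cmod (\<phi> (psub p x a)))\<^sup>2)"
    using integrable_distr_eq[OF Tm, of "\<lambda>y. (cmod (\<phi> y))\<^sup>2"] pi pm Td by simp
  ultimately show ?thesis unfolding L2m_def by simp
qed

lemma pdivp_pzero: "pdivp p pzero = pzero"
  unfolding pdivp_def pzero_def by simp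

lemma main_nontriv:
  fixes p N :: nat and V :: "int \<Rightarrow> ((nat \<Rightarrow> rat) \<Rightarrow> complex) set"
    and \<phi> :: "(nat \<Rightarrow> rat) \<Rightarrow> complex"
  assumes p: "p \<ge> 2" and E: "haarEx p"
    and MRA: "MRA p V"
    and sf: "scaling_function p V \<phi>"
    and supp: "AE x in haar p. x \<notin> pball p (int N) pzero \<longrightarrow> \<phi> x = 0"
  shows "\<exists>c. AE x in haar p. \<phi> x = (\<Sum>k<p ^ (N + 1). c k * \<phi> (psub p (pdivp p x) (ak p N k)))"
proof -
  interpret semin "L2m (haar p)" "nrmM (haar p)" by (rule L2m_semin)
  have cs: "\<And>j. closed_subspace p (V j)" and incl: "\<And>j. V j \<subseteq> V (j + 1)"
    and dil: "\<And>j f. f \<in> V j \<longleftrightarrow> (\<lambda>x. f (pdivp p x)) \<in> V (j + 1)"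
    using MRA unfolding MRA_def by auto
  have phiV: "\<phi> \<in> V 0" and V0: "V 0 = L2closure p (trans_span p \<phi>)"
    using sf unfolding scaling_function_def by auto
  have VL: "\<And>j. V j \<subseteq> L2m (haar p)" using cs unfolding closed_subspace_def L2_eq by auto
  have Vcl: "\<And>j. L2closure p (V j) \<subseteq> V j" using cs unfolding closed_subspace_def by auto
  have phiL: "\<phi> \<in> L2m (haar p)" using phiV VL by blast
  have pm: "\<phi> \<in> borel_measurable (haar p)" and pi: "integrable (haar p) (\<lambda>x. (cmod (\<phi> x))\<^sup>2)"
    using phiL unfolding L2m_def by auto
  define f where "f = (\<lambda>x. \<phi> (mulp p x))"
  have fpd: "\<And>x. x \<in> space (haar p) \<Longrightarrow> f (pdivp p x) = \<phi> x"
    unfolding f_def space_haar using mulp_pdivp[OF p] by simp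
  have "\<phi> \<in> V 1" using phiV incl[of 0] by auto
  have fV1: "(\<lambda>x. f (pdivp p x)) \<in> V 1"
  proof -
    have "(\<lambda>x. f (pdivp p x)) \<in> borel_measurable (haar p) \<longleftrightarrow> \<phi> \<in> borel_measurable (haar p)"
      by (rule measurable_cong) (simp add: fpd)
    then have m: "(\<lambda>x. f (pdivp p x)) \<in> borel_measurable (haar p)" using pm by simp
    have "integrable (haar p) (\<lambda>x. (cmod (f (pdivp p x)))\<^sup>2) \<longleftrightarrow> integrable (haar p) (\<lambda>x. (cmod (\<phi> x))\<^sup>2)"
      by (rule Bochner_Integration.integrable_cong) (simp_all add: fpd)
    then have i: "integrable (haar p) (\<lambda>x. (cmod (f (pdivp p x)))\<^sup>2)" using pi by simp
    have d: "l2dist p (\<lambda>x. f (pdivp p x)) \<phi> = 0"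
    proof -
      have "(\<integral>x. (cmod (f (pdivp p x) - \<phi> x))\<^sup>2 \<partial>haar p) = (\<integral>x. 0 \<partial>haar p)"
        by (rule Bochner_Integration.integral_cong) (simp_all add: fpd)
      then show ?thesis unfolding l2dist_def by simp
    qed
    have "(\<lambda>x. f (pdivp p x)) \<in> L2closure p (V 1)"
      unfolding L2closure_def L2_eq L2m_def using m i d \<open>\<phi> \<in> V 1\<close> by (auto intro!: bexI[of _ \<phi>])
    then show ?thesis using Vcl[of 1] by blast
  qed
  have fV0: "f \<in> V 0" using dil[of f 0] fV1 by simp
  have fL: "f \<in> L2m (haar p)" using fV0 VL by blast
  have approx: "\<And>e. e > 0 \<Longrightarrow> \<exists>s\<in>trans_span p \<phi>. nrmM (haar p) (\<lambda>x. f x - s x) < e"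
    using fV0 unfolding V0 L2closure_def l2dist_eq by blast
  define B where "B = pball p (int N) pzero"
  define B' where "B' = pball p (int (N + 1)) pzero"
  have fsupp: "AE x in haar p. x \<notin> B' \<longrightarrow> f x = 0"
  proof -
    have "AE x in haar p. mulp p x \<notin> B \<longrightarrow> \<phi> (mulp p x) = 0"
      using mulp_AE[OF p E supp] unfolding B_def .
    then show ?thesis using AE_space
    proof eventually_elim
      case (elim x)
      show ?case
      proof
        assume nb: "x \<notin> B'"
        have "mulp p x \<notin> B"
          using pre_mulp[OF p _ pzero_padic[OF p], of x "int N"] elim(2) nb unfolding B_def B'_def space_haar pdivp_pzero
          by (simp add: add.commute)
        then show "f x = 0" using elim(1) unfolding f_def by simp
      qed
    qed
  qed
  have tsupp: "\<And>a. a \<in> padic p \<Longrightarrow> AE x in haar p. psub p x a \<notin> B \<longrightarrow> \<phi> (psub p x a) = 0"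
    using transl_AE[OF p E _ supp] unfolding B_def .
  define K where "K = {..<p ^ (N + 1)}"
  define \<psi> where "\<psi> k = (\<lambda>x. \<phi> (psub p x (ak p N k)))" for k
  have finK: "finite K" unfolding K_def by simp
  have psiL: "\<forall>k\<in>K. \<psi> k \<in> L2m (haar p)"
    unfolding \<psi>_def using transl_L2[OF p E ak_padic[OF p] phiL] by blast
  have akB': "\<And>k. k \<in> K \<Longrightarrow> ak p N k \<in> B'" unfolding K_def B'_def using ak_ball[OF p] by simp
  have Ip_sub: "Ip p \<subseteq> padic p" unfolding Ip_def by auto
  have red: "\<forall>e>0. \<exists>c. nrmM (haar p) (\<lambda>x. f x - (\<Sum>k\<in>K. c k * \<psi> k x)) < e"
  proof (intro allI impI)
    fix e :: real assume e: "e > 0"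
    obtain s where s: "s \<in> trans_span p \<phi>" and se: "nrmM (haar p) (\<lambda>x. f x - s x) < e"
      using approx[OF e] by blast
    obtain F c where sF: "s = (\<lambda>x. \<Sum>a\<in>F. c a * \<phi> (psub p x a))" and F: "finite F" "F \<subseteq> Ip p"
      using s unfolding trans_span_def by blast
    define c' where "c' k = (if ak p N k \<in> F then c (ak p N k) else 0)" for k
    have sL: "s \<in> L2m (haar p)"
      unfolding sF using sumL[OF F(1), of "\<lambda>a x. \<phi> (psub p x a)" c] transl_L2[OF p E _ phiL] F(2) Ip_sub
      by blast
    have SL: "(\<lambda>x. \<Sum>k\<in>K. c' k * \<psi> k x) \<in> L2m (haar p)" using sumL[OF finK psiL] .
    have AE1: "AE x in haar p. \<forall>a\<in>F. psub p x a \<notin> B \<longrightarrow> \<phi> (psub p x a) = 0"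
      using F tsupp Ip_sub by (intro AE_finite_allI) auto
    have AE2: "AE x in haar p. \<forall>k\<in>K. psub p x (ak p N k) \<notin> B \<longrightarrow> \<psi> k x = 0"
      unfolding \<psi>_def using finK tsupp ak_padic[OF p] by (intro AE_finite_allI) auto
    have pw: "AE x in haar p. (cmod (f x - (\<Sum>k\<in>K. c' k * \<psi> k x)))\<^sup>2 \<le> (cmod (f x - s x))\<^sup>2"
      using AE1 AE2 fsupp AE_space
    proof eventually_elim
      case (elim x)
      have x: "x \<in> padic p" using elim(4) space_haar by simp
      show ?case
      proof (cases "x \<in> B'")
        case False
        have "\<psi> k x = 0" if k: "k \<in> K" for k
        proof -
          have "psub p x (ak p N k) \<notin> B"
            using ball_diff2[OF p x akB'[OF k, unfolded B'_def]] False unfolding B_def B'_def by blast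
          then show ?thesis using elim(2) k by blast
        qed
        then have "(\<Sum>k\<in>K. c' k * \<psi> k x) = 0" by simp
        moreover have "f x = 0" using elim(3) False by simp
        ultimately show ?thesis by simp
      next
        case True
        define G where "G = {k \<in> K. ak p N k \<in> F}"
        have "s x = (\<Sum>a\<in>F \<inter> ak p N ` K. c a * \<phi> (psub p x a))"
        proof -
          have "(\<Sum>a\<in>F. c a * \<phi> (psub p x a)) = (\<Sum>a\<in>F \<inter> ak p N ` K. c a * \<phi> (psub p x a))"
          proof (rule sum.mono_neutral_right[OF F(1)])
            show "F \<inter> ak p N ` K \<subseteq> F" by blast
            show "\<forall>a\<in>F - F \<inter> ak p N ` K. c a * \<phi> (psub p x a) = 0"
            proof
              fix a assume a: "a \<in> F - F \<inter> ak p N ` K"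
              have aIp: "a \<in> Ip p" using a F(2) by blast
              have "psub p x a \<notin> B"
              proof
                assume "psub p x a \<in> B"
                then have "a \<in> B'" using ball_diff1[OF p _ _] True aIp Ip_sub unfolding B_def B'_def by blast
                then obtain k where "k < p ^ (N+1)" "a = ak p N k" using Ip_ball_ak[OF p aIp] unfolding B'_def by blast
                then show False using a unfolding K_def by blast
              qed
              then show "c a * \<phi> (psub p x a) = 0" using elim(1) a by simp
            qed
          qed
          then show ?thesis unfolding sF .
        qed
        also have "F \<inter> ak p N ` K = ak p N ` G" unfolding G_def by blast
        also have "(\<Sum>a\<in>ak p N ` G. c a * \<phi> (psub p x a)) = (\<Sum>k\<in>G. c (ak p N k) * \<psi> k x)"
        proof (subst sum.reindex)
          show "inj_on (ak p N) G" using ak_inj[OF p, of N] unfolding G_def K_def by (rule inj_on_subset) auto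
        qed (simp add: \<psi>_def)
        also have "\<dots> = (\<Sum>k\<in>K. c' k * \<psi> k x)"
          unfolding G_def c'_def using finK by (simp add: sum.inter_filter) (intro sum.cong, auto)
        finally show ?thesis by simp
      qed
    qed
    have "nrmM (haar p) (\<lambda>x. f x - (\<Sum>k\<in>K. c' k * \<psi> k x)) \<le> nrmM (haar p) (\<lambda>x. f x - s x)"
      unfolding nrmM_def
    proof (rule real_sqrt_le_mono, rule integral_mono_AE[OF _ _ pw])
      show "integrable (haar p) (\<lambda>x. (cmod (f x - (\<Sum>k\<in>K. c' k * \<psi> k x)))\<^sup>2)"
        using diffL[OF fL SL] unfolding L2m_def by simp
      show "integrable (haar p) (\<lambda>x. (cmod (f x - s x))\<^sup>2)"
        using diffL[OF fL sL] unfolding L2m_def by simp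
    qed
    then show "\<exists>c. nrmM (haar p) (\<lambda>x. f x - (\<Sum>k\<in>K. c k * \<psi> k x)) < e" using se by (intro exI[of _ c']) simp
  qed
  obtain c where c: "nrmM (haar p) (\<lambda>x. f x - (\<Sum>k\<in>K. c k * \<psi> k x)) = 0"
    using findim[OF finK psiL fL red] by blast
  have dL: "(\<lambda>x. f x - (\<Sum>k\<in>K. c k * \<psi> k x)) \<in> L2m (haar p)" using diffL[OF fL sumL[OF finK psiL]] .
  have "(\<integral>x. (cmod (f x - (\<Sum>k\<in>K. c k * \<psi> k x)))\<^sup>2 \<partial>haar p) = 0"
    using c unfolding nrmM_def by simp
  then have "AE x in haar p. (cmod (f x - (\<Sum>k\<in>K. c k * \<psi> k x)))\<^sup>2 = 0"
    using integral_nonneg_eq_0_iff_AE[of "haar p" "\<lambda>x. (cmod (f x - (\<Sum>k\<in>K. c k * \<psi> k x)))\<^sup>2"] dL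
    unfolding L2m_def by simp
  then have "AE x in haar p. f x = (\<Sum>k\<in>K. c k * \<psi> k x)" by eventually_elim simp
  then have "AE x in haar p. f (pdivp p x) = (\<Sum>k\<in>K. c k * \<psi> k (pdivp p x))" by (rule pdivp_AE[OF p E])
  then have "AE x in haar p. \<phi> x = (\<Sum>k\<in>K. c k * \<psi> k (pdivp p x))"
    using AE_space by eventually_elim (simp add: fpd)
  then show ?thesis unfolding K_def \<psi>_def by blast
qed





theorem corollary2:
  fixes p N :: nat and V :: "int \<Rightarrow> ((nat \<Rightarrow> rat) \<Rightarrow> complex) set"
    and \<phi> :: "(nat \<Rightarrow> rat) \<Rightarrow> complex"
  assumes "prime p"
    and "MRA p V"
    and "scaling_function p V \<phi>"
    and "AE x in haar p. x \<notin> pball p (int N) pzero \<longrightarrow> \<phi> x = 0"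
  shows "refinable p \<phi> \<and>
    (\<exists>h :: nat \<Rightarrow> complex. AE x in haar p.
       \<phi> x = (\<Sum>k<p ^ (N + 1). h k *
          \<phi> (psub p (pdivp p x) (padic_of_rat p (of_nat k / of_nat (p ^ (N + 1)))))))"
proof -
  have p: "p \<ge> 2" using assms(1) prime_ge_2_nat by blast
  show ?thesis
  proof (cases "haarEx p")
    case False
    have null: "AE x in haar p. P x" for P
    proof -
      have "space (haar p) \<in> null_sets (haar p)" using haar_trivial[OF False] by (simp add: null_sets_def)
      then show ?thesis by (rule AE_I') auto
    qed
    have "refinable p \<phi>"
      unfolding refinable_def l2dist_def
      by (intro exI[of _ "\<lambda>_. 0"]) (simp add: integral_eq_zero_AE[OF null])
    then show ?thesis using null by blast
  next
    case True
    obtain c where c: "AE x in haar p. \<phi> x = (\<Sum>k<p ^ (N + 1). c k * \<phi> (psub p (pdivp p x) (ak p N k)))"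
      using main_nontriv[OF p True assms(2,3,4)] by blast
    define K where "K = {..<p ^ (N + 1)}"
    define \<alpha> where "\<alpha> a = (\<Sum>k\<in>{k. k \<in> K \<and> ak p N k = a}. c k)" for a
    have ev: "eventually (\<lambda>F. l2dist p \<phi> (\<lambda>x. \<Sum>a\<in>F. \<alpha> a * \<phi> (psub p (pdivp p x) a)) = 0) (finite_subsets_at_top (Ip p))"
      unfolding eventually_finite_subsets_at_top
    proof (intro exI[of _ "ak p N ` K"] conjI allI impI)
      show "finite (ak p N ` K)" unfolding K_def by simp
      show "ak p N ` K \<subseteq> Ip p" unfolding K_def using ak_Ip[OF p] by auto
      fix F assume F: "finite F \<and> ak p N ` K \<subseteq> F \<and> F \<subseteq> Ip p"
      have sums: "(\<Sum>a\<in>F. \<alpha> a * \<phi> (psub p (pdivp p x) a)) = (\<Sum>k<p ^ (N + 1). c k * \<phi> (psub p (pdivp p x) (ak p N k)))" for x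
      proof -
        have "(\<Sum>a\<in>F. \<alpha> a * \<phi> (psub p (pdivp p x) a))
            = (\<Sum>a\<in>F. \<Sum>k\<in>{k. k \<in> K \<and> ak p N k = a}. c k * \<phi> (psub p (pdivp p x) (ak p N k)))"
          unfolding \<alpha>_def sum_distrib_right by (intro sum.cong) auto
        also have "\<dots> = (\<Sum>k\<in>K. c k * \<phi> (psub p (pdivp p x) (ak p N k)))"
          using F by (intro sum.group) (auto simp: K_def)
        finally show ?thesis unfolding K_def .
      qed
      show "l2dist p \<phi> (\<lambda>x. \<Sum>a\<in>F. \<alpha> a * \<phi> (psub p (pdivp p x) a)) = 0"
        unfolding l2dist_def sums using c by (subst integral_eq_zero_AE) (auto elim!: eventually_mono)
    qed
    have "refinable p \<phi>" unfolding refinable_def using tendsto_eventually[OF ev] by blast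
    moreover have "\<exists>h :: nat \<Rightarrow> complex. AE x in haar p.
       \<phi> x = (\<Sum>k<p ^ (N + 1). h k *
          \<phi> (psub p (pdivp p x) (padic_of_rat p (of_nat k / of_nat (p ^ (N + 1))))))"
      using c unfolding ak_def by blast
    ultimately show ?thesis by blast
  qed
qed


end
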